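(* Consider each of the following smooth families of functions $F_{\mathbf c,\mathbf s}:\mathbb{R}^2\to\mathbb{R}$ of $\mathbf x=(x,y)$, with parameters $\mathbf c$ (possibly absent) and $\mathbf s=(s_1,s_2)$, together with the induced family of maps $\mathbf f_{\mathbf c}:\mathbb{R}^2\to\mathbb{R}^2$ between planes, and the associated number $N$: (1) Fold ($A_2$), $N=2$: $F_{\mathbf s}=-s_1x+s_2y+\tfrac12x^2-\tfrac13y^3$, $\mathbf f(x,y)=(x,\,y^2)$. (2) Cusp ($A_3$), $N=3$: $F_{\mathbf s}=-s_1x+s_2y+\tfrac12x^2-\tfrac12s_1y^2-\tfrac14y^4$, $\mathbf f(x,y)=(x,\,xy+y^3)$. (3) Swallowtail ($A_4$), $N=4$: $F_{c,\mathbf s}=s_1x-s_2y-\tfrac12s_2x^2+\tfrac12y^2-\tfrac13cx^3-\tfrac15x^5$, $\mathbf f_c(x,y)=(xy+cx^2+x^4,\,y)$. (4) Elliptic umbilic ($D_4^-$), $N=4$: $F_{c,\mathbf s}=s_1x+s_2y+c(x^2+y^2)+x^3-3xy^2$, $\mathbf f_c(x,y)=(3y^2-3x^2-2cx,\,6xy-2cy)$. (5) Hyperbolic umbilic ($D_4^+$), $N=4$: $F_{c,\mathbf s}=s_1x+s_2y+cxy+x^3+y^3$, $\mathbf f_c(x,y)=(-3x^2-cy,\,-3y^2-cx)$. (6) Butterfly ($A_5$), $N=5$: $F_{\mathbf c,\mathbf s}=x^6+c_1x^4+c_2x^3+s_2x^2+s_1x+\tfrac12y^2-s_2y$, $\mathbf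 f_{\mathbf c}(x,y)=(-2xy-3c_2x^2-4c_1x^3-6x^5,\,y)$. (7) Parabolic umbilic ($D_5$), $N=5$: $F_{\mathbf c,\mathbf s}=x^2y+y^4+c_1x^2+c_2y^2-s_1x-s_2y$, $\mathbf f_{\mathbf c}(x,y)=(2c_1x+2xy,\,2c_2y+x^2+4y^3)$. (8) Wigwam ($A_6$), $N=6$: $F_{\mathbf c,\mathbf s}=x^7+c_1x^5+c_2x^4+c_3x^3+s_2x^2+s_1x+\tfrac12y^2-s_2y$, $\mathbf f_{\mathbf c}(x,y)=(-2xy-3c_3x^2-4c_2x^3-5c_1x^4-7x^6,\,y)$. (9) Symbolic umbilic ($E_6$), $N=6$: $F_{\mathbf c,\mathbf s}=x^3+y^4+c_1xy^2+c_2xy+c_3y^2+s_2y+s_1x$, $\mathbf f_{\mathbf c}(x,y)=(-3x^2-c_1y^2-c_2y,\,-4y^3-2c_1xy-c_2x-2c_3y)$. (10) $2^{\rm nd}$ elliptic umbilic ($D_6^-$), $N=6$: $F_{\mathbf c,\mathbf s}=x^2y-y^5+c_1y^4+c_2y^3+c_3y^2+s_2y+s_1x$, $\mathbf f_{\mathbf c}(x,y)=(-2xy,\,-x^2+5y^4-4c_1y^3-3c_2y^2-2c_3y)$. (11) $2^{\rm nd}$ hyperbolic umbilic ($D_6^+$), $N=6$: $F_{\mathbf c,\mathbf s}=x^2y+y^5+c_1y^4+c_2y^3+c_3y^2+s_2y+s_1x$, $\mathbf f_{\mathbf c}(x,y)=(-2xy,\,-x^2-5y^4-4c_1y^3-3c_2y^2-2c_3y)$.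 For any of these families, any parameter value $\mathbf c$, and any non-caustic point $\mathbf s$ lying in the region of the target plane giving rise to the maximum number $N$ of real pre-images $\mathbf x_1,\dots,\mathbf x_N$ (i.e. critical points of $F_{\mathbf c,\mathbf s}$), the magnifications $\mathfrak M_i=\mathfrak M(\mathbf x_i;\mathbf s)$ satisfy $$\sum_{i=1}^{N}\mathfrak M_i=0.$$
   Context: For each family, a critical point $\mathbf x_0$ of $F_{\mathbf c,\mathbf s}$ (i.e. $\operatorname{grad}F_{\mathbf c,\mathbf s}(\mathbf x_0)=\mathbf 0$) is the same as a pre-image of $\mathbf s$ under $\mathbf f_{\mathbf c}$, i.e. $\mathbf f_{\mathbf c}(\mathbf x_0)=\mathbf s$. The magnification at such a point is $\mathfrak M(\mathbf x_0;\mathbf s)=1/\mathrm{Gauss}(\mathbf x_0,F_{\mathbf c,\mathbf s}(\mathbf x_0))$, the reciprocal of the Gaussian curvature of the graph of $F_{\mathbf c,\mathbf s}$ at that point; this equals $1/\det(\operatorname{Hess}F_{\mathbf c,\mathbf s})(\mathbf x_0)=1/\det(\operatorname{Jac}\mathbf f_{\mathbf c})(\mathbf x_0)$. A caustic point is a target point $\mathbf s$ that is the image under $\mathbf f_{\mathbf c}$ of a point where $\det(\operatorname{Jac}\mathbf f_{\mathbf c})=0$; a non-caustic point is one that is not caustic, so all its magnifications are finite. *)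

theory Defs
  imports "HOL-Analysis.Analysis"
begin

text \<open>The parameter vector c = (c1, c2, c3) is a triple; families with fewer parameters
  simply ignore the unused components (a scalar parameter c is c1).\<close>

datatype catastrophe =
    Fold | Cusp | Swallowtail | EllipticUmbilic | HyperbolicUmbilic | Butterfly
  | ParabolicUmbilic | Wigwam | SymbolicUmbilic | EllipticUmbilic2 | HyperbolicUmbilic2

definition vec2 :: "real \<Rightarrow> real \<Rightarrow> real^2" where
  "vec2 a b = (\<chi> i. if i = 1 then a else b)"

fun lens_map :: "catastrophe \<Rightarrow> real \<times> real \<times> real \<Rightarrow> real^2 \<Rightarrow> real^2" where
  "lens_map Fold (c1, c2, c3) p = vec2 (p$1) ((p$2)^2)"
| "lens_map Cusp (c1, c2, c3) p = vec2 (p$1) (p$1 * p$2 + (p$2)^3)"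
| "lens_map Swallowtail (c1, c2, c3) p =
     vec2 (p$1 * p$2 + c1 * (p$1)^2 + (p$1)^4) (p$2)"
| "lens_map EllipticUmbilic (c1, c2, c3) p =
     vec2 (3 * (p$2)^2 - 3 * (p$1)^2 - 2 * c1 * p$1) (6 * p$1 * p$2 - 2 * c1 * p$2)"
| "lens_map HyperbolicUmbilic (c1, c2, c3) p =
     vec2 (- 3 * (p$1)^2 - c1 * p$2) (- 3 * (p$2)^2 - c1 * p$1)"
| "lens_map Butterfly (c1, c2, c3) p =
     vec2 (- 2 * p$1 * p$2 - 3 * c2 * (p$1)^2 - 4 * c1 * (p$1)^3 - 6 * (p$1)^5) (p$2)"
| "lens_map ParabolicUmbilic (c1, c2, c3) p =
     vec2 (2 * c1 * p$1 + 2 * p$1 * p$2) (2 * c2 * p$2 + (p$1)^2 + 4 * (p$2)^3)"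
| "lens_map Wigwam (c1, c2, c3) p =
     vec2 (- 2 * p$1 * p$2 - 3 * c3 * (p$1)^2 - 4 * c2 * (p$1)^3 - 5 * c1 * (p$1)^4
           - 7 * (p$1)^6) (p$2)"
| "lens_map SymbolicUmbilic (c1, c2, c3) p =
     vec2 (- 3 * (p$1)^2 - c1 * (p$2)^2 - c2 * p$2)
          (- 4 * (p$2)^3 - 2 * c1 * p$1 * p$2 - c2 * p$1 - 2 * c3 * p$2)"
| "lens_map EllipticUmbilic2 (c1, c2, c3) p =
     vec2 (- 2 * p$1 * p$2)
          (- ((p$1)^2) + 5 * (p$2)^4 - 4 * c1 * (p$2)^3 - 3 * c2 * (p$2)^2 - 2 * c3 * p$2)"
| "lens_map HyperbolicUmbilic2 (c1, c2, c3) p =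
     vec2 (- 2 * p$1 * p$2)
          (- ((p$1)^2) - 5 * (p$2)^4 - 4 * c1 * (p$2)^3 - 3 * c2 * (p$2)^2 - 2 * c3 * p$2)"

fun max_images :: "catastrophe \<Rightarrow> nat" where
  "max_images Fold = 2"
| "max_images Cusp = 3"
| "max_images Swallowtail = 4"
| "max_images EllipticUmbilic = 4"
| "max_images HyperbolicUmbilic = 4"
| "max_images Butterfly = 5"
| "max_images ParabolicUmbilic = 5"
| "max_images Wigwam = 6"
| "max_images SymbolicUmbilic = 6"
| "max_images EllipticUmbilic2 = 6"
| "max_images HyperbolicUmbilic2 = 6"

definition magnification :: "catastrophe \<Rightarrow> real \<times> real \<times> real \<Rightarrow> real^2 \<Rightarrow> real" where
  "magnification k c p = 1 / det (jacobian (lens_map k c) (at p))"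

definition caustic :: "catastrophe \<Rightarrow> real \<times> real \<times> real \<Rightarrow> real^2 \<Rightarrow> bool" where
  "caustic k c s \<longleftrightarrow> (\<exists>p. lens_map k c p = s \<and> det (jacobian (lens_map k c) (at p)) = 0)"

end

theory Submission
  imports Defs "HOL-Computational_Algebra.Polynomial"
begin

lemma vec2_nth [simp]: "vec2 a b $ 1 = a" "vec2 a b $ 2 = b"
  by (simp_all add: vec2_def)

lemma vec2_eq_iff: "vec2 a b = v \<longleftrightarrow> a = v$1 \<and> b = v$2"
  by (auto simp: vec2_def vec_eq_iff forall_2)

lemma vec2_alt: "vec2 a b = a *\<^sub>R axis 1 1 + b *\<^sub>R axis 2 1"
  by (simp add: vec2_def vec_eq_iff forall_2 axis_def)

lemma has_derivative_vec2:
  assumes "(F has_derivative F') (at p)" "(G has_derivative G') (at p)"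
  shows "((\<lambda>p. vec2 (F p) (G p)) has_derivative (\<lambda>h. vec2 (F' h) (G' h))) (at p)"
  unfolding vec2_alt
  by (intro derivative_intros assms)

lemma has_derivative_nth2 [derivative_intros]:
  "((\<lambda>x::real^2. x$i) has_derivative (\<lambda>h. h$i)) F"
  by (rule bounded_linear_imp_has_derivative) (rule bounded_linear_vec_nth)

lemma jac2:
  assumes "(f has_derivative (\<lambda>h. vec2 (a*h$1 + b*h$2) (c*h$1 + d*h$2))) (at p)"
  shows "det (jacobian f (at p)) = a*d - b*c"
proof -
  have "frechet_derivative f (at p) = (\<lambda>h. vec2 (a*h$1 + b*h$2) (c*h$1 + d*h$2))"
    using frechet_derivative_at[OF assms] by simp
  then show ?thesis
    by (simp add: jacobian_def matrix_def det_2 axis_def)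
qed

lemma "((\<lambda>p::real^2. p$1 * p$2 + c1 * (p$1)^2 + (p$1)^4) has_derivative (\<lambda>h. (p$2 + 2*c1*p$1 + 4*(p$1)^3) * h$1 + p$1 * h$2)) (at p)"
  by (auto intro!: derivative_eq_intros simp: fun_eq_iff algebra_simps power2_eq_square power3_eq_cube)

lemma lin_prod_deg:
  fixes A :: "real set"
  assumes "finite A"
  shows "degree (\<Prod>a\<in>A. [:-a,1:]) = card A" "coeff (\<Prod>a\<in>A. [:-a,1:]) (card A) = 1"
proof -
  show d: "degree (\<Prod>a\<in>A. [:-a,1:]) = card A"
    by (subst degree_prod_sum_eq) auto
  have "lead_coeff (\<Prod>a\<in>A. [:-a,1:]) = 1"
    by (simp add: lead_coeff_prod)
  then show "coeff (\<Prod>a\<in>A. [:-a,1:]) (card A) = 1" using d by simp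
qed

lemma poly_lin_prod: "poly (\<Prod>a\<in>A. [:-a,1:]) (x::real) = (\<Prod>a\<in>A. (x - a))"
  unfolding poly_prod by (intro prod.cong) auto

lemma interp_sum:
  fixes R :: "real set" and B :: "real poly"
  assumes fin: "finite R" and card: "card R = Suc m" and degB: "degree B \<le> m"
  shows "(\<Sum>r\<in>R. poly B r / (\<Prod>r'\<in>R-{r}. (r - r'))) = coeff B m"
proof -
  define d where "d r = (\<Prod>r'\<in>R-{r}. (r - r'))" for r
  define P where "P r = (\<Prod>r'\<in>R-{r}. [:-r',1:])" for r
  define L where "L = (\<Sum>r\<in>R. smult (poly B r / d r) (P r))"
  have dnz: "d r \<noteq> 0" if "r \<in> R" for r
    unfolding d_def using fin by (subst prod_zero_iff) auto
  have cardm: "card (R - {r}) = m" if "r \<in> R" for r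
    using that card fin by simp
  have degP: "degree (P r) = m" and coeffP: "coeff (P r) m = 1" if "r \<in> R" for r
    using lin_prod_deg[of "R - {r}"] fin cardm[OF that] unfolding P_def by auto
  have polyP: "poly (P r) x = (\<Prod>r'\<in>R-{r}. (x - r'))" for r x
    unfolding P_def by (rule poly_lin_prod)
  have P0: "poly (P r) r0 = 0" if "r0 \<in> R" "r \<noteq> r0" for r r0
    unfolding polyP using fin that by (subst prod_zero_iff) auto
  have Pr: "poly (P r) r = d r" for r unfolding polyP d_def ..
  have polyL: "poly L r0 = poly B r0" if r0: "r0 \<in> R" for r0
  proof -
    have "poly L r0 = (\<Sum>r\<in>R. poly B r / d r * poly (P r) r0)"
      unfolding L_def by (simp add: poly_sum)
    also have "\<dots> = poly B r0 / d r0 * poly (P r0) r0 + (\<Sum>r\<in>R-{r0}. poly B r / d r * poly (P r) r0)"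
      using fin r0 by (subst sum.remove) auto
    also have "(\<Sum>r\<in>R-{r0}. poly B r / d r * poly (P r) r0) = 0"
      using P0[OF r0] by (intro sum.neutral) auto
    finally show ?thesis using dnz[OF r0] by (simp add: Pr)
  qed
  have degL: "degree L \<le> m"
    unfolding L_def using fin
    by (intro degree_sum_le) (auto intro: order.trans[OF degree_smult_le] simp: degP)
  have "L = B"
    by (rule poly_eqI_degree[of R]) (use polyL degL degB card in auto)
  then have "coeff B m = coeff L m" by simp
  also have "\<dots> = (\<Sum>r\<in>R. poly B r / d r)"
    unfolding L_def by (simp add: coeff_sum coeffP)
  finally show ?thesis unfolding d_def by simp
qed

lemma roots_factor:
  fixes Q :: "real poly" and R :: "real set"
  assumes "finite R" "card R = degree Q" "\<forall>r\<in>R. poly Q r = 0"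
  shows "Q = smult (lead_coeff Q) (\<Prod>r\<in>R. [:-r,1:])"
proof (rule poly_eqI_degree_lead_coeff[of _ "degree Q" _ R])
  show "coeff Q (degree Q) = coeff (smult (lead_coeff Q) (\<Prod>r\<in>R. [:- r, 1:])) (degree Q)"
    using lin_prod_deg[OF assms(1)] assms(2) by simp
  show "degree (smult (lead_coeff Q) (\<Prod>r\<in>R. [:- r, 1:])) \<le> degree Q"
    using lin_prod_deg[OF assms(1)] assms(2) by (simp add: degree_smult_le order.trans[OF degree_smult_le])
  show "poly Q z = poly (smult (lead_coeff Q) (\<Prod>r\<in>R. [:- r, 1:])) z" if "z \<in> R" for z
    using that assms by (simp add: poly_lin_prod prod_zero_iff)
qed (use assms in auto)

lemma deriv_at_root:
  fixes Q :: "real poly" and R :: "real set"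
  assumes fin: "finite R" "card R = degree Q" "\<forall>r\<in>R. poly Q r = 0" and r: "r \<in> R"
  shows "poly (pderiv Q) r = lead_coeff Q * (\<Prod>r'\<in>R-{r}. (r - r'))"
proof -
  have "poly (pderiv Q) r = lead_coeff Q * poly (pderiv (\<Prod>r\<in>R. [:-r,1:])) r"
    by (subst roots_factor[OF assms(1-3)]) (simp add: pderiv_smult)
  also have "poly (pderiv (\<Prod>r\<in>R. [:-r,1:])) r = (\<Sum>a\<in>R. \<Prod>b\<in>R-{a}. (r - b))"
    by (simp add: pderiv_prod poly_sum poly_prod pderiv_pCons)
  also have "\<dots> = (\<Prod>b\<in>R-{r}. (r - b)) + (\<Sum>a\<in>R-{r}. \<Prod>b\<in>R-{a}. (r - b))"
    using fin r by (subst sum.remove) auto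
  also have "(\<Sum>a\<in>R-{r}. \<Prod>b\<in>R-{a}. (r - b)) = 0"
    using fin r by (intro sum.neutral) (auto simp: prod_zero_iff)
  finally show ?thesis by simp
qed

lemma main_sum:
  fixes S :: "'a set" and \<pi> :: "'a \<Rightarrow> real" and J :: "'a \<Rightarrow> real" and Q B :: "real poly"
  assumes cardS: "card S = degree Q" and deg2: "degree Q \<ge> 2" and inj: "inj_on \<pi> S"
    and root: "\<forall>p\<in>S. poly Q (\<pi> p) = 0" and degB: "degree B \<le> degree Q - 2"
    and JB: "\<forall>p\<in>S. J p * poly B (\<pi> p) = poly (pderiv Q) (\<pi> p)"
  shows "(\<Sum>p\<in>S. 1 / J p) = 0"
proof -
  have finS: "finite S" using cardS deg2 card.infinite by fastforce
  define R where "R = \<pi> ` S"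
  have finR: "finite R" using finS R_def by simp
  have cardR: "card R = degree Q" using card_image[OF inj] cardS R_def by simp
  have rootR: "\<forall>r\<in>R. poly Q r = 0" using root R_def by auto
  define d where "d r = (\<Prod>r'\<in>R-{r}. (r - r'))" for r
  have dnz: "d r \<noteq> 0" if "r \<in> R" for r
    unfolding d_def using finR by (subst prod_zero_iff) auto
  have Q0: "Q \<noteq> 0" using deg2 by auto
  have lc: "lead_coeff Q \<noteq> 0" using Q0 by simp
  have eq: "1 / J p = poly B (\<pi> p) / (lead_coeff Q * d (\<pi> p))" if "p \<in> S" for p
  proof -
    have r: "\<pi> p \<in> R" using that R_def by auto
    have "poly (pderiv Q) (\<pi> p) = lead_coeff Q * d (\<pi> p)"
      using deriv_at_root[OF finR cardR rootR r] d_def by simp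
    then have "J p * poly B (\<pi> p) = lead_coeff Q * d (\<pi> p)" using JB that by simp
    moreover have "lead_coeff Q * d (\<pi> p) \<noteq> 0" using lc dnz[OF r] by simp
    ultimately have "J p \<noteq> 0" "J p * poly B (\<pi> p) = lead_coeff Q * d (\<pi> p)" by auto
    then show ?thesis using lc dnz[OF r] by (simp add: field_simps)
  qed
  have "(\<Sum>p\<in>S. 1 / J p) = (\<Sum>p\<in>S. poly B (\<pi> p) / (lead_coeff Q * d (\<pi> p)))"
    using eq by simp
  also have "\<dots> = (\<Sum>r\<in>R. poly B r / (lead_coeff Q * d r))"
    unfolding R_def by (rule sum.reindex[OF inj, symmetric, unfolded o_def])
  also have "\<dots> = (1 / lead_coeff Q) * (\<Sum>r\<in>R. poly B r / d r)"
    by (simp add: sum_distrib_left)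
  also have "(\<Sum>r\<in>R. poly B r / d r) = coeff B (degree Q - 1)"
    unfolding d_def using deg2 degB cardR by (intro interp_sum finR) auto
  also have "coeff B (degree Q - 1) = 0"
    using degB deg2 by (intro coeff_eq_0) auto
  finally show ?thesis by simp
qed

lemma pf_sum:
  fixes S :: "'a set" and \<pi> :: "'a \<Rightarrow> real" and J :: "'a \<Rightarrow> real" and g :: "real poly"
  assumes cardS: "card S = degree g" and deg1: "degree g \<ge> 1" and inj: "inj_on \<pi> S"
    and root: "\<forall>p\<in>S. poly g (\<pi> p) = 0" and ga: "poly g a \<noteq> 0" and K: "K \<noteq> 0"
    and JK: "\<forall>p\<in>S. J p = K * (a - \<pi> p) * poly (pderiv g) (\<pi> p)"
  shows "(\<Sum>p\<in>S. 1 / J p) = 1 / (K * poly g a)"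
proof -
  have finS: "finite S" using cardS deg1 card.infinite by fastforce
  define R where "R = \<pi> ` S"
  have finR: "finite R" using finS R_def by simp
  have cardR: "card R = degree g" using card_image[OF inj] cardS R_def by simp
  have rootR: "\<forall>r\<in>R. poly g r = 0" using root R_def by auto
  have aR: "a \<notin> R" using rootR ga by auto
  define d where "d r = (\<Prod>r'\<in>R-{r}. (r - r'))" for r
  define R' where "R' = insert a R"
  define d' where "d' r = (\<Prod>r'\<in>R'-{r}. (r - r'))" for r
  have g0: "g \<noteq> 0" using deg1 by auto
  have lc: "lead_coeff g \<noteq> 0" using g0 by simp
  have ga': "poly g a = lead_coeff g * d' a"
  proof -
    have "poly g a = lead_coeff g * (\<Prod>r\<in>R. (a - r))"
      by (subst roots_factor[OF finR cardR rootR]) (simp add: poly_lin_prod)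
    moreover have "R' - {a} = R" using aR R'_def by auto
    ultimately show ?thesis unfolding d'_def by simp
  qed
  have d'r: "d' r = (r - a) * d r" if "r \<in> R" for r
  proof -
    have "R' - {r} = insert a (R - {r})" using R'_def that aR by auto
    then show ?thesis unfolding d'_def d_def using finR aR by simp
  qed
  have "(\<Sum>r\<in>R'. 1 / d' r) = coeff (1::real poly) (degree g)"
    unfolding d'_def R'_def using interp_sum[of "insert a R" "degree g" 1] finR aR cardR by simp
  also have "\<dots> = 0" using deg1 by simp
  finally have "1 / d' a + (\<Sum>r\<in>R. 1 / d' r) = 0"
    unfolding R'_def using finR aR by simp
  then have sumR: "(\<Sum>r\<in>R. 1 / d' r) = - lead_coeff g / poly g a"
    using ga' lc by (auto simp: field_simps)
  have eq: "1 / J p = - (1 / (K * lead_coeff g)) * (1 / d' (\<pi> p))" if "p \<in> S" for p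
  proof -
    have r: "\<pi> p \<in> R" using that R_def by auto
    have "poly (pderiv g) (\<pi> p) = lead_coeff g * d (\<pi> p)"
      using deriv_at_root[OF finR cardR rootR r] d_def by simp
    moreover have "J p = K * (a - \<pi> p) * poly (pderiv g) (\<pi> p)" using JK that by simp
    ultimately have "J p = - (K * lead_coeff g) * ((\<pi> p - a) * d (\<pi> p))"
      by (simp add: algebra_simps)
    then have "J p = - (K * lead_coeff g) * d' (\<pi> p)"
      using d'r[OF r] by simp
    then show ?thesis by simp
  qed
  have "(\<Sum>p\<in>S. 1 / J p) = (\<Sum>p\<in>S. - (1 / (K * lead_coeff g)) * (1 / d' (\<pi> p)))"
    using eq by simp
  also have "\<dots> = - (1 / (K * lead_coeff g)) * (\<Sum>r\<in>R. 1 / d' r)"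
    unfolding R_def sum_distrib_left[symmetric] sum.reindex[OF inj] o_def ..
  also have "\<dots> = 1 / (K * poly g a)"
    unfolding sumR using lc K ga by (simp add: field_simps)
  finally show ?thesis .
qed

lemma jac_of:
  assumes "f = (\<lambda>p. vec2 (F p) (G p))"
    "(F has_derivative (\<lambda>h. a*h$1 + b*h$2)) (at p)" "(G has_derivative (\<lambda>h. c*h$1+d*h$2)) (at p)"
  shows "det (jacobian f (at p)) = a*d - b*c"
  unfolding assms(1) by (rule jac2, rule has_derivative_vec2[OF assms(2,3)])

lemma pre_iff: "lens_map k c p = s \<longleftrightarrow> lens_map k c p $ 1 = s$1 \<and> lens_map k c p $ 2 = s$2"
  by (auto simp: vec_eq_iff forall_2)

lemma vec2_ext: "(p::real^2) = q \<longleftrightarrow> p$1 = q$1 \<and> p$2 = q$2"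
  by (auto simp: vec_eq_iff forall_2)

lemma jac_Fold: "det (jacobian (lens_map Fold (c1,c2,c3)) (at p)) = (1) * (2*p$2) - (0) * (0)"
proof (rule jac_of[where F="\<lambda>p. p$1" and G="\<lambda>p. (p$2)^2"])
  show "lens_map Fold (c1,c2,c3) = (\<lambda>p. vec2 (p$1) ((p$2)^2))" by (rule ext) simp
  show "((\<lambda>p. p$1) has_derivative (\<lambda>h. (1)*h$1 + (0)*h$2)) (at p)"
    by (auto intro!: derivative_eq_intros simp: fun_eq_iff algebra_simps power2_eq_square power3_eq_cube power4_eq_xxxx)
  show "((\<lambda>p. (p$2)^2) has_derivative (\<lambda>h. (0)*h$1 + (2*p$2)*h$2)) (at p)"
    by (auto intro!: derivative_eq_intros simp: fun_eq_iff algebra_simps power2_eq_square power3_eq_cube power4_eq_xxxx)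
qed

lemma jac_Cusp: "det (jacobian (lens_map Cusp (c1,c2,c3)) (at p)) = (1) * (p$1 + 3*(p$2)^2) - (0) * (p$2)"
proof (rule jac_of[where F="\<lambda>p. p$1" and G="\<lambda>p. p$1 * p$2 + (p$2)^3"])
  show "lens_map Cusp (c1,c2,c3) = (\<lambda>p. vec2 (p$1) (p$1 * p$2 + (p$2)^3))" by (rule ext) simp
  show "((\<lambda>p. p$1) has_derivative (\<lambda>h. (1)*h$1 + (0)*h$2)) (at p)"
    by (auto intro!: derivative_eq_intros simp: fun_eq_iff algebra_simps power2_eq_square power3_eq_cube power4_eq_xxxx)
  show "((\<lambda>p. p$1 * p$2 + (p$2)^3) has_derivative (\<lambda>h. (p$2)*h$1 + (p$1 + 3*(p$2)^2)*h$2)) (at p)"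
    by (auto intro!: derivative_eq_intros simp: fun_eq_iff algebra_simps power2_eq_square power3_eq_cube power4_eq_xxxx)
qed

lemma jac_Swallowtail: "det (jacobian (lens_map Swallowtail (c1,c2,c3)) (at p)) = (p$2 + 2*c1*p$1 + 4*(p$1)^3) * (1) - (p$1) * (0)"
proof (rule jac_of[where F="\<lambda>p. p$1 * p$2 + c1 * (p$1)^2 + (p$1)^4" and G="\<lambda>p. p$2"])
  show "lens_map Swallowtail (c1,c2,c3) = (\<lambda>p. vec2 (p$1 * p$2 + c1 * (p$1)^2 + (p$1)^4) (p$2))" by (rule ext) simp
  show "((\<lambda>p. p$1 * p$2 + c1 * (p$1)^2 + (p$1)^4) has_derivative (\<lambda>h. (p$2 + 2*c1*p$1 + 4*(p$1)^3)*h$1 + (p$1)*h$2)) (at p)"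
    by (auto intro!: derivative_eq_intros simp: fun_eq_iff algebra_simps power2_eq_square power3_eq_cube power4_eq_xxxx)
  show "((\<lambda>p. p$2) has_derivative (\<lambda>h. (0)*h$1 + (1)*h$2)) (at p)"
    by (auto intro!: derivative_eq_intros simp: fun_eq_iff algebra_simps power2_eq_square power3_eq_cube power4_eq_xxxx)
qed

lemma jac_EllipticUmbilic: "det (jacobian (lens_map EllipticUmbilic (c1,c2,c3)) (at p)) = (-6*p$1 - 2*c1) * (6*p$1 - 2*c1) - (6*p$2) * (6*p$2)"
proof (rule jac_of[where F="\<lambda>p. 3 * (p$2)^2 - 3 * (p$1)^2 - 2 * c1 * p$1" and G="\<lambda>p. 6 * p$1 * p$2 - 2 * c1 * p$2"])
  show "lens_map EllipticUmbilic (c1,c2,c3) = (\<lambda>p. vec2 (3 * (p$2)^2 - 3 * (p$1)^2 - 2 * c1 * p$1) (6 * p$1 * p$2 - 2 * c1 * p$2))" by (rule ext) simp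
  show "((\<lambda>p. 3 * (p$2)^2 - 3 * (p$1)^2 - 2 * c1 * p$1) has_derivative (\<lambda>h. (-6*p$1 - 2*c1)*h$1 + (6*p$2)*h$2)) (at p)"
    by (auto intro!: derivative_eq_intros simp: fun_eq_iff algebra_simps power2_eq_square power3_eq_cube power4_eq_xxxx)
  show "((\<lambda>p. 6 * p$1 * p$2 - 2 * c1 * p$2) has_derivative (\<lambda>h. (6*p$2)*h$1 + (6*p$1 - 2*c1)*h$2)) (at p)"
    by (auto intro!: derivative_eq_intros simp: fun_eq_iff algebra_simps power2_eq_square power3_eq_cube power4_eq_xxxx)
qed

lemma jac_HyperbolicUmbilic: "det (jacobian (lens_map HyperbolicUmbilic (c1,c2,c3)) (at p)) = (-6*p$1) * (-6*p$2) - (-c1) * (-c1)"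
proof (rule jac_of[where F="\<lambda>p. - 3 * (p$1)^2 - c1 * p$2" and G="\<lambda>p. - 3 * (p$2)^2 - c1 * p$1"])
  show "lens_map HyperbolicUmbilic (c1,c2,c3) = (\<lambda>p. vec2 (- 3 * (p$1)^2 - c1 * p$2) (- 3 * (p$2)^2 - c1 * p$1))" by (rule ext) simp
  show "((\<lambda>p. - 3 * (p$1)^2 - c1 * p$2) has_derivative (\<lambda>h. (-6*p$1)*h$1 + (-c1)*h$2)) (at p)"
    by (auto intro!: derivative_eq_intros simp: fun_eq_iff algebra_simps power2_eq_square power3_eq_cube power4_eq_xxxx)
  show "((\<lambda>p. - 3 * (p$2)^2 - c1 * p$1) has_derivative (\<lambda>h. (-c1)*h$1 + (-6*p$2)*h$2)) (at p)"
    by (auto intro!: derivative_eq_intros simp: fun_eq_iff algebra_simps power2_eq_square power3_eq_cube power4_eq_xxxx)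
qed

lemma jac_Butterfly: "det (jacobian (lens_map Butterfly (c1,c2,c3)) (at p)) = (-2*p$2 - 6*c2*p$1 - 12*c1*(p$1)^2 - 30*(p$1)^4) * (1) - (-2*p$1) * (0)"
proof (rule jac_of[where F="\<lambda>p. - 2 * p$1 * p$2 - 3 * c2 * (p$1)^2 - 4 * c1 * (p$1)^3 - 6 * (p$1)^5" and G="\<lambda>p. p$2"])
  show "lens_map Butterfly (c1,c2,c3) = (\<lambda>p. vec2 (- 2 * p$1 * p$2 - 3 * c2 * (p$1)^2 - 4 * c1 * (p$1)^3 - 6 * (p$1)^5) (p$2))" by (rule ext) simp
  show "((\<lambda>p. - 2 * p$1 * p$2 - 3 * c2 * (p$1)^2 - 4 * c1 * (p$1)^3 - 6 * (p$1)^5) has_derivative (\<lambda>h. (-2*p$2 - 6*c2*p$1 - 12*c1*(p$1)^2 - 30*(p$1)^4)*h$1 + (-2*p$1)*h$2)) (at p)"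
    by (auto intro!: derivative_eq_intros simp: fun_eq_iff algebra_simps power2_eq_square power3_eq_cube power4_eq_xxxx)
  show "((\<lambda>p. p$2) has_derivative (\<lambda>h. (0)*h$1 + (1)*h$2)) (at p)"
    by (auto intro!: derivative_eq_intros simp: fun_eq_iff algebra_simps power2_eq_square power3_eq_cube power4_eq_xxxx)
qed

lemma jac_ParabolicUmbilic: "det (jacobian (lens_map ParabolicUmbilic (c1,c2,c3)) (at p)) = (2*c1 + 2*p$2) * (2*c2 + 12*(p$2)^2) - (2*p$1) * (2*p$1)"
proof (rule jac_of[where F="\<lambda>p. 2 * c1 * p$1 + 2 * p$1 * p$2" and G="\<lambda>p. 2 * c2 * p$2 + (p$1)^2 + 4 * (p$2)^3"])
  show "lens_map ParabolicUmbilic (c1,c2,c3) = (\<lambda>p. vec2 (2 * c1 * p$1 + 2 * p$1 * p$2) (2 * c2 * p$2 + (p$1)^2 + 4 * (p$2)^3))" by (rule ext) simp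
  show "((\<lambda>p. 2 * c1 * p$1 + 2 * p$1 * p$2) has_derivative (\<lambda>h. (2*c1 + 2*p$2)*h$1 + (2*p$1)*h$2)) (at p)"
    by (auto intro!: derivative_eq_intros simp: fun_eq_iff algebra_simps power2_eq_square power3_eq_cube power4_eq_xxxx)
  show "((\<lambda>p. 2 * c2 * p$2 + (p$1)^2 + 4 * (p$2)^3) has_derivative (\<lambda>h. (2*p$1)*h$1 + (2*c2 + 12*(p$2)^2)*h$2)) (at p)"
    by (auto intro!: derivative_eq_intros simp: fun_eq_iff algebra_simps power2_eq_square power3_eq_cube power4_eq_xxxx)
qed

lemma jac_Wigwam: "det (jacobian (lens_map Wigwam (c1,c2,c3)) (at p)) = (-2*p$2 - 6*c3*p$1 - 12*c2*(p$1)^2 - 20*c1*(p$1)^3 - 42*(p$1)^5) * (1) - (-2*p$1) * (0)"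
proof (rule jac_of[where F="\<lambda>p. - 2 * p$1 * p$2 - 3 * c3 * (p$1)^2 - 4 * c2 * (p$1)^3 - 5 * c1 * (p$1)^4 - 7 * (p$1)^6" and G="\<lambda>p. p$2"])
  show "lens_map Wigwam (c1,c2,c3) = (\<lambda>p. vec2 (- 2 * p$1 * p$2 - 3 * c3 * (p$1)^2 - 4 * c2 * (p$1)^3 - 5 * c1 * (p$1)^4 - 7 * (p$1)^6) (p$2))" by (rule ext) simp
  show "((\<lambda>p. - 2 * p$1 * p$2 - 3 * c3 * (p$1)^2 - 4 * c2 * (p$1)^3 - 5 * c1 * (p$1)^4 - 7 * (p$1)^6) has_derivative (\<lambda>h. (-2*p$2 - 6*c3*p$1 - 12*c2*(p$1)^2 - 20*c1*(p$1)^3 - 42*(p$1)^5)*h$1 + (-2*p$1)*h$2)) (at p)"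
    by (auto intro!: derivative_eq_intros simp: fun_eq_iff algebra_simps power2_eq_square power3_eq_cube power4_eq_xxxx)
  show "((\<lambda>p. p$2) has_derivative (\<lambda>h. (0)*h$1 + (1)*h$2)) (at p)"
    by (auto intro!: derivative_eq_intros simp: fun_eq_iff algebra_simps power2_eq_square power3_eq_cube power4_eq_xxxx)
qed

lemma jac_SymbolicUmbilic: "det (jacobian (lens_map SymbolicUmbilic (c1,c2,c3)) (at p)) = (-6*p$1) * (-12*(p$2)^2 - 2*c1*p$1 - 2*c3) - (-2*c1*p$2 - c2) * (-2*c1*p$2 - c2)"
proof (rule jac_of[where F="\<lambda>p. - 3 * (p$1)^2 - c1 * (p$2)^2 - c2 * p$2" and G="\<lambda>p. - 4 * (p$2)^3 - 2 * c1 * p$1 * p$2 - c2 * p$1 - 2 * c3 * p$2"])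
  show "lens_map SymbolicUmbilic (c1,c2,c3) = (\<lambda>p. vec2 (- 3 * (p$1)^2 - c1 * (p$2)^2 - c2 * p$2) (- 4 * (p$2)^3 - 2 * c1 * p$1 * p$2 - c2 * p$1 - 2 * c3 * p$2))" by (rule ext) simp
  show "((\<lambda>p. - 3 * (p$1)^2 - c1 * (p$2)^2 - c2 * p$2) has_derivative (\<lambda>h. (-6*p$1)*h$1 + (-2*c1*p$2 - c2)*h$2)) (at p)"
    by (auto intro!: derivative_eq_intros simp: fun_eq_iff algebra_simps power2_eq_square power3_eq_cube power4_eq_xxxx)
  show "((\<lambda>p. - 4 * (p$2)^3 - 2 * c1 * p$1 * p$2 - c2 * p$1 - 2 * c3 * p$2) has_derivative (\<lambda>h. (-2*c1*p$2 - c2)*h$1 + (-12*(p$2)^2 - 2*c1*p$1 - 2*c3)*h$2)) (at p)"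
    by (auto intro!: derivative_eq_intros simp: fun_eq_iff algebra_simps power2_eq_square power3_eq_cube power4_eq_xxxx)
qed

lemma jac_EllipticUmbilic2: "det (jacobian (lens_map EllipticUmbilic2 (c1,c2,c3)) (at p)) = (-2*p$2) * (20*(p$2)^3 - 12*c1*(p$2)^2 - 6*c2*p$2 - 2*c3) - (-2*p$1) * (-2*p$1)"
proof (rule jac_of[where F="\<lambda>p. - 2 * p$1 * p$2" and G="\<lambda>p. - ((p$1)^2) + 5 * (p$2)^4 - 4 * c1 * (p$2)^3 - 3 * c2 * (p$2)^2 - 2 * c3 * p$2"])
  show "lens_map EllipticUmbilic2 (c1,c2,c3) = (\<lambda>p. vec2 (- 2 * p$1 * p$2) (- ((p$1)^2) + 5 * (p$2)^4 - 4 * c1 * (p$2)^3 - 3 * c2 * (p$2)^2 - 2 * c3 * p$2))" by (rule ext) simp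
  show "((\<lambda>p. - 2 * p$1 * p$2) has_derivative (\<lambda>h. (-2*p$2)*h$1 + (-2*p$1)*h$2)) (at p)"
    by (auto intro!: derivative_eq_intros simp: fun_eq_iff algebra_simps power2_eq_square power3_eq_cube power4_eq_xxxx)
  show "((\<lambda>p. - ((p$1)^2) + 5 * (p$2)^4 - 4 * c1 * (p$2)^3 - 3 * c2 * (p$2)^2 - 2 * c3 * p$2) has_derivative (\<lambda>h. (-2*p$1)*h$1 + (20*(p$2)^3 - 12*c1*(p$2)^2 - 6*c2*p$2 - 2*c3)*h$2)) (at p)"
    by (auto intro!: derivative_eq_intros simp: fun_eq_iff algebra_simps power2_eq_square power3_eq_cube power4_eq_xxxx)
qed

lemma jac_HyperbolicUmbilic2: "det (jacobian (lens_map HyperbolicUmbilic2 (c1,c2,c3)) (at p)) = (-2*p$2) * (-20*(p$2)^3 - 12*c1*(p$2)^2 - 6*c2*p$2 - 2*c3) - (-2*p$1) * (-2*p$1)"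
proof (rule jac_of[where F="\<lambda>p. - 2 * p$1 * p$2" and G="\<lambda>p. - ((p$1)^2) - 5 * (p$2)^4 - 4 * c1 * (p$2)^3 - 3 * c2 * (p$2)^2 - 2 * c3 * p$2"])
  show "lens_map HyperbolicUmbilic2 (c1,c2,c3) = (\<lambda>p. vec2 (- 2 * p$1 * p$2) (- ((p$1)^2) - 5 * (p$2)^4 - 4 * c1 * (p$2)^3 - 3 * c2 * (p$2)^2 - 2 * c3 * p$2))" by (rule ext) simp
  show "((\<lambda>p. - 2 * p$1 * p$2) has_derivative (\<lambda>h. (-2*p$2)*h$1 + (-2*p$1)*h$2)) (at p)"
    by (auto intro!: derivative_eq_intros simp: fun_eq_iff algebra_simps power2_eq_square power3_eq_cube power4_eq_xxxx)
  show "((\<lambda>p. - ((p$1)^2) - 5 * (p$2)^4 - 4 * c1 * (p$2)^3 - 3 * c2 * (p$2)^2 - 2 * c3 * p$2) has_derivative (\<lambda>h. (-2*p$1)*h$1 + (-20*(p$2)^3 - 12*c1*(p$2)^2 - 6*c2*p$2 - 2*c3)*h$2)) (at p)"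
    by (auto intro!: derivative_eq_intros simp: fun_eq_iff algebra_simps power2_eq_square power3_eq_cube power4_eq_xxxx)
qed

lemma case_fold:
  assumes card: "card {p. lens_map Fold (c1,c2,c3) p = s} = 2"
  shows "(\<Sum>p\<in>{p. lens_map Fold (c1,c2,c3) p = s}. magnification Fold (c1,c2,c3) p) = 0"
proof -
  let ?S = "{p. lens_map Fold (c1,c2,c3) p = s}"
  have "(\<Sum>p\<in>?S. magnification Fold (c1,c2,c3) p) = (\<Sum>p\<in>?S. 1 / (2 * p$2))"
    by (simp add: magnification_def jac_Fold)
  also have "\<dots> = 0"
  proof (rule main_sum[where \<pi>="\<lambda>p. p$2" and Q="[:-s$2,0,1:]" and B=1])
    show "card ?S = degree [:-s$2,0,1:]" using card by simp
    show "inj_on (\<lambda>p. p$2) ?S" by (auto simp: inj_on_def vec2_ext)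
    show "\<forall>p\<in>?S. poly [:-s$2,0,1:] (p$2) = 0" by (auto simp: power2_eq_square)
    show "\<forall>p\<in>?S. 2 * p$2 * poly 1 (p$2) = poly (pderiv [:-s$2,0,1:]) (p$2)"
      by (auto simp: pderiv_pCons)
  qed simp_all
  finally show ?thesis .
qed

lemma case_cusp:
  assumes card: "card {p. lens_map Cusp (c1,c2,c3) p = s} = 3" 
  shows "(\<Sum>p\<in>{p. lens_map Cusp (c1,c2,c3) p = s}. magnification Cusp (c1,c2,c3) p) = 0"
  unfolding magnification_def jac_Cusp
proof (rule main_sum[where \<pi>="\<lambda>p. p$2" and Q="[:-s$2, s$1, 0, 1:]" and B="1"])
  show "card {p. lens_map Cusp (c1,c2,c3) p = s} = degree ([:-s$2, s$1, 0, 1:])" using card by simp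
  show "inj_on (\<lambda>p. p$2) {p. lens_map Cusp (c1,c2,c3) p = s}"
  proof (rule inj_onI)
    fix p q assume p: "p \<in> {p. lens_map Cusp (c1,c2,c3) p = s}" and q: "q \<in> {p. lens_map Cusp (c1,c2,c3) p = s}" and pq: "p$2 = q$2"
    from p have ps1: "s$1 = lens_map Cusp (c1,c2,c3) p $ 1" and ps2: "s$2 = lens_map Cusp (c1,c2,c3) p $ 2" by auto
    from q have qs1: "s$1 = lens_map Cusp (c1,c2,c3) q $ 1" and qs2: "s$2 = lens_map Cusp (c1,c2,c3) q $ 2" by auto
    show "p = q" using ps1 ps2 qs1 qs2 pq  unfolding vec2_ext by (auto)
  qed
  show "\<forall>p\<in>{p. lens_map Cusp (c1,c2,c3) p = s}. poly ([:-s$2, s$1, 0, 1:]) (p$2) = 0"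
  proof
    fix p assume p: "p \<in> {p. lens_map Cusp (c1,c2,c3) p = s}"
    from p have s1: "s$1 = lens_map Cusp (c1,c2,c3) p $ 1" and s2: "s$2 = lens_map Cusp (c1,c2,c3) p $ 2" by auto
    show "poly ([:-s$2, s$1, 0, 1:]) (p$2) = 0" by (simp add: s1 s2; algebra)
  qed
  show "\<forall>p\<in>{p. lens_map Cusp (c1,c2,c3) p = s}. ((1) * (p$1 + 3*(p$2)^2) - (0) * (p$2)) * poly (1) (p$2) = poly (pderiv ([:-s$2, s$1, 0, 1:])) (p$2)"
  proof
    fix p assume p: "p \<in> {p. lens_map Cusp (c1,c2,c3) p = s}"
    from p have s1: "s$1 = lens_map Cusp (c1,c2,c3) p $ 1" and s2: "s$2 = lens_map Cusp (c1,c2,c3) p $ 2" by auto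
    show "((1) * (p$1 + 3*(p$2)^2) - (0) * (p$2)) * poly (1) (p$2) = poly (pderiv ([:-s$2, s$1, 0, 1:])) (p$2)" by (simp add: s1 s2 pderiv_pCons; algebra)
  qed
qed simp_all

lemma case_swallowtail:
  assumes card: "card {p. lens_map Swallowtail (c1,c2,c3) p = s} = 4" 
  shows "(\<Sum>p\<in>{p. lens_map Swallowtail (c1,c2,c3) p = s}. magnification Swallowtail (c1,c2,c3) p) = 0"
  unfolding magnification_def jac_Swallowtail
proof (rule main_sum[where \<pi>="\<lambda>p. p$1" and Q="[:-s$1, s$2, c1, 0, 1:]" and B="1"])
  show "card {p. lens_map Swallowtail (c1,c2,c3) p = s} = degree ([:-s$1, s$2, c1, 0, 1:])" using card by simp
  show "inj_on (\<lambda>p. p$1) {p. lens_map Swallowtail (c1,c2,c3) p = s}"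
  proof (rule inj_onI)
    fix p q assume p: "p \<in> {p. lens_map Swallowtail (c1,c2,c3) p = s}" and q: "q \<in> {p. lens_map Swallowtail (c1,c2,c3) p = s}" and pq: "p$1 = q$1"
    from p have ps1: "s$1 = lens_map Swallowtail (c1,c2,c3) p $ 1" and ps2: "s$2 = lens_map Swallowtail (c1,c2,c3) p $ 2" by auto
    from q have qs1: "s$1 = lens_map Swallowtail (c1,c2,c3) q $ 1" and qs2: "s$2 = lens_map Swallowtail (c1,c2,c3) q $ 2" by auto
    show "p = q" using ps1 ps2 qs1 qs2 pq  unfolding vec2_ext by (auto)
  qed
  show "\<forall>p\<in>{p. lens_map Swallowtail (c1,c2,c3) p = s}. poly ([:-s$1, s$2, c1, 0, 1:]) (p$1) = 0"
  proof
    fix p assume p: "p \<in> {p. lens_map Swallowtail (c1,c2,c3) p = s}"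
    from p have s1: "s$1 = lens_map Swallowtail (c1,c2,c3) p $ 1" and s2: "s$2 = lens_map Swallowtail (c1,c2,c3) p $ 2" by auto
    show "poly ([:-s$1, s$2, c1, 0, 1:]) (p$1) = 0" by (simp add: s1 s2; algebra)
  qed
  show "\<forall>p\<in>{p. lens_map Swallowtail (c1,c2,c3) p = s}. ((p$2 + 2*c1*p$1 + 4*(p$1)^3) * (1) - (p$1) * (0)) * poly (1) (p$1) = poly (pderiv ([:-s$1, s$2, c1, 0, 1:])) (p$1)"
  proof
    fix p assume p: "p \<in> {p. lens_map Swallowtail (c1,c2,c3) p = s}"
    from p have s1: "s$1 = lens_map Swallowtail (c1,c2,c3) p $ 1" and s2: "s$2 = lens_map Swallowtail (c1,c2,c3) p $ 2" by auto
    show "((p$2 + 2*c1*p$1 + 4*(p$1)^3) * (1) - (p$1) * (0)) * poly (1) (p$1) = poly (pderiv ([:-s$1, s$2, c1, 0, 1:])) (p$1)" by (simp add: s1 s2 pderiv_pCons; algebra)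
  qed
qed simp_all

lemma case_butterfly:
  assumes card: "card {p. lens_map Butterfly (c1,c2,c3) p = s} = 5" 
  shows "(\<Sum>p\<in>{p. lens_map Butterfly (c1,c2,c3) p = s}. magnification Butterfly (c1,c2,c3) p) = 0"
  unfolding magnification_def jac_Butterfly
proof (rule main_sum[where \<pi>="\<lambda>p. p$1" and Q="[:-s$1, -(2 * s$2), -3*c2, -4*c1, 0, -6:]" and B="1"])
  show "card {p. lens_map Butterfly (c1,c2,c3) p = s} = degree ([:-s$1, -(2 * s$2), -3*c2, -4*c1, 0, -6:])" using card by simp
  show "inj_on (\<lambda>p. p$1) {p. lens_map Butterfly (c1,c2,c3) p = s}"
  proof (rule inj_onI)
    fix p q assume p: "p \<in> {p. lens_map Butterfly (c1,c2,c3) p = s}" and q: "q \<in> {p. lens_map Butterfly (c1,c2,c3) p = s}" and pq: "p$1 = q$1"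
    from p have ps1: "s$1 = lens_map Butterfly (c1,c2,c3) p $ 1" and ps2: "s$2 = lens_map Butterfly (c1,c2,c3) p $ 2" by auto
    from q have qs1: "s$1 = lens_map Butterfly (c1,c2,c3) q $ 1" and qs2: "s$2 = lens_map Butterfly (c1,c2,c3) q $ 2" by auto
    show "p = q" using ps1 ps2 qs1 qs2 pq  unfolding vec2_ext by (auto)
  qed
  show "\<forall>p\<in>{p. lens_map Butterfly (c1,c2,c3) p = s}. poly ([:-s$1, -(2 * s$2), -3*c2, -4*c1, 0, -6:]) (p$1) = 0"
  proof
    fix p assume p: "p \<in> {p. lens_map Butterfly (c1,c2,c3) p = s}"
    from p have s1: "s$1 = lens_map Butterfly (c1,c2,c3) p $ 1" and s2: "s$2 = lens_map Butterfly (c1,c2,c3) p $ 2" by auto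
    show "poly ([:-s$1, -(2 * s$2), -3*c2, -4*c1, 0, -6:]) (p$1) = 0" by (simp add: s1 s2; algebra)
  qed
  show "\<forall>p\<in>{p. lens_map Butterfly (c1,c2,c3) p = s}. ((-2*p$2 - 6*c2*p$1 - 12*c1*(p$1)^2 - 30*(p$1)^4) * (1) - (-2*p$1) * (0)) * poly (1) (p$1) = poly (pderiv ([:-s$1, -(2 * s$2), -3*c2, -4*c1, 0, -6:])) (p$1)"
  proof
    fix p assume p: "p \<in> {p. lens_map Butterfly (c1,c2,c3) p = s}"
    from p have s1: "s$1 = lens_map Butterfly (c1,c2,c3) p $ 1" and s2: "s$2 = lens_map Butterfly (c1,c2,c3) p $ 2" by auto
    show "((-2*p$2 - 6*c2*p$1 - 12*c1*(p$1)^2 - 30*(p$1)^4) * (1) - (-2*p$1) * (0)) * poly (1) (p$1) = poly (pderiv ([:-s$1, -(2 * s$2), -3*c2, -4*c1, 0, -6:])) (p$1)" by (simp add: s1 s2 pderiv_pCons; algebra)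
  qed
qed simp_all

lemma case_wigwam:
  assumes card: "card {p. lens_map Wigwam (c1,c2,c3) p = s} = 6" 
  shows "(\<Sum>p\<in>{p. lens_map Wigwam (c1,c2,c3) p = s}. magnification Wigwam (c1,c2,c3) p) = 0"
  unfolding magnification_def jac_Wigwam
proof (rule main_sum[where \<pi>="\<lambda>p. p$1" and Q="[:-s$1, -(2 * s$2), -3*c3, -4*c2, -5*c1, 0, -7:]" and B="1"])
  show "card {p. lens_map Wigwam (c1,c2,c3) p = s} = degree ([:-s$1, -(2 * s$2), -3*c3, -4*c2, -5*c1, 0, -7:])" using card by simp
  show "inj_on (\<lambda>p. p$1) {p. lens_map Wigwam (c1,c2,c3) p = s}"
  proof (rule inj_onI)
    fix p q assume p: "p \<in> {p. lens_map Wigwam (c1,c2,c3) p = s}" and q: "q \<in> {p. lens_map Wigwam (c1,c2,c3) p = s}" and pq: "p$1 = q$1"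
    from p have ps1: "s$1 = lens_map Wigwam (c1,c2,c3) p $ 1" and ps2: "s$2 = lens_map Wigwam (c1,c2,c3) p $ 2" by auto
    from q have qs1: "s$1 = lens_map Wigwam (c1,c2,c3) q $ 1" and qs2: "s$2 = lens_map Wigwam (c1,c2,c3) q $ 2" by auto
    show "p = q" using ps1 ps2 qs1 qs2 pq  unfolding vec2_ext by (auto)
  qed
  show "\<forall>p\<in>{p. lens_map Wigwam (c1,c2,c3) p = s}. poly ([:-s$1, -(2 * s$2), -3*c3, -4*c2, -5*c1, 0, -7:]) (p$1) = 0"
  proof
    fix p assume p: "p \<in> {p. lens_map Wigwam (c1,c2,c3) p = s}"
    from p have s1: "s$1 = lens_map Wigwam (c1,c2,c3) p $ 1" and s2: "s$2 = lens_map Wigwam (c1,c2,c3) p $ 2" by auto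
    show "poly ([:-s$1, -(2 * s$2), -3*c3, -4*c2, -5*c1, 0, -7:]) (p$1) = 0" by (simp add: s1 s2; algebra)
  qed
  show "\<forall>p\<in>{p. lens_map Wigwam (c1,c2,c3) p = s}. ((-2*p$2 - 6*c3*p$1 - 12*c2*(p$1)^2 - 20*c1*(p$1)^3 - 42*(p$1)^5) * (1) - (-2*p$1) * (0)) * poly (1) (p$1) = poly (pderiv ([:-s$1, -(2 * s$2), -3*c3, -4*c2, -5*c1, 0, -7:])) (p$1)"
  proof
    fix p assume p: "p \<in> {p. lens_map Wigwam (c1,c2,c3) p = s}"
    from p have s1: "s$1 = lens_map Wigwam (c1,c2,c3) p $ 1" and s2: "s$2 = lens_map Wigwam (c1,c2,c3) p $ 2" by auto
    show "((-2*p$2 - 6*c3*p$1 - 12*c2*(p$1)^2 - 20*c1*(p$1)^3 - 42*(p$1)^5) * (1) - (-2*p$1) * (0)) * poly (1) (p$1) = poly (pderiv ([:-s$1, -(2 * s$2), -3*c3, -4*c2, -5*c1, 0, -7:])) (p$1)" by (simp add: s1 s2 pderiv_pCons; algebra)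
  qed
qed simp_all

lemma case_elliptic:
  assumes card: "card {p. lens_map EllipticUmbilic (c1,c2,c3) p = s} = 4" and nz: "s$2 \<noteq> 0"
  shows "(\<Sum>p\<in>{p. lens_map EllipticUmbilic (c1,c2,c3) p = s}. magnification EllipticUmbilic (c1,c2,c3) p) = 0"
  unfolding magnification_def jac_EllipticUmbilic
proof (rule main_sum[where \<pi>="\<lambda>p. p$1" and Q="[:(- 4 * c1^2 * (s$1) + 3 * (s$2)^2), (24 * c1 * (s$1) - 8 * c1^3), (36 * c1^2 - 36 * (s$1)), 0, (- 108):]" and B="[:-2 * c1, 6:]"])
  show "card {p. lens_map EllipticUmbilic (c1,c2,c3) p = s} = degree ([:(- 4 * c1^2 * (s$1) + 3 * (s$2)^2), (24 * c1 * (s$1) - 8 * c1^3), (36 * c1^2 - 36 * (s$1)), 0, (- 108):])" using card by simp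
  show "inj_on (\<lambda>p. p$1) {p. lens_map EllipticUmbilic (c1,c2,c3) p = s}"
  proof (rule inj_onI)
    fix p q assume p: "p \<in> {p. lens_map EllipticUmbilic (c1,c2,c3) p = s}" and q: "q \<in> {p. lens_map EllipticUmbilic (c1,c2,c3) p = s}" and pq: "p$1 = q$1"
    from p have ps1: "s$1 = lens_map EllipticUmbilic (c1,c2,c3) p $ 1" and ps2: "s$2 = lens_map EllipticUmbilic (c1,c2,c3) p $ 2" by auto
    from q have qs1: "s$1 = lens_map EllipticUmbilic (c1,c2,c3) q $ 1" and qs2: "s$2 = lens_map EllipticUmbilic (c1,c2,c3) q $ 2" by auto
    have eA: "(6 * p$1 - 2 * c1) * p$2 = (6 * p$1 - 2 * c1) * q$2" using ps2 qs2 pq by (simp add: algebra_simps; algebra)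
    have nA: "6 * p$1 - 2 * c1 \<noteq> 0" proof
      assume "6 * p$1 - 2 * c1 = 0"
      moreover have "s$2 = (6 * p$1 - 2 * c1) * (p$2)" using ps2 by (simp add: algebra_simps)
      ultimately show False using nz by simp
    qed
    show "p = q" using eA nA pq unfolding vec2_ext by auto
  qed
  show "\<forall>p\<in>{p. lens_map EllipticUmbilic (c1,c2,c3) p = s}. poly ([:(- 4 * c1^2 * (s$1) + 3 * (s$2)^2), (24 * c1 * (s$1) - 8 * c1^3), (36 * c1^2 - 36 * (s$1)), 0, (- 108):]) (p$1) = 0"
  proof
    fix p assume p: "p \<in> {p. lens_map EllipticUmbilic (c1,c2,c3) p = s}"
    from p have s1: "s$1 = lens_map EllipticUmbilic (c1,c2,c3) p $ 1" and s2: "s$2 = lens_map EllipticUmbilic (c1,c2,c3) p $ 2" by auto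
    show "poly ([:(- 4 * c1^2 * (s$1) + 3 * (s$2)^2), (24 * c1 * (s$1) - 8 * c1^3), (36 * c1^2 - 36 * (s$1)), 0, (- 108):]) (p$1) = 0" by (simp add: s1 s2; algebra)
  qed
  show "\<forall>p\<in>{p. lens_map EllipticUmbilic (c1,c2,c3) p = s}. ((-6*p$1 - 2*c1) * (6*p$1 - 2*c1) - (6*p$2) * (6*p$2)) * poly ([:-2 * c1, 6:]) (p$1) = poly (pderiv ([:(- 4 * c1^2 * (s$1) + 3 * (s$2)^2), (24 * c1 * (s$1) - 8 * c1^3), (36 * c1^2 - 36 * (s$1)), 0, (- 108):])) (p$1)"
  proof
    fix p assume p: "p \<in> {p. lens_map EllipticUmbilic (c1,c2,c3) p = s}"
    from p have s1: "s$1 = lens_map EllipticUmbilic (c1,c2,c3) p $ 1" and s2: "s$2 = lens_map EllipticUmbilic (c1,c2,c3) p $ 2" by auto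
    show "((-6*p$1 - 2*c1) * (6*p$1 - 2*c1) - (6*p$2) * (6*p$2)) * poly ([:-2 * c1, 6:]) (p$1) = poly (pderiv ([:(- 4 * c1^2 * (s$1) + 3 * (s$2)^2), (24 * c1 * (s$1) - 8 * c1^3), (36 * c1^2 - 36 * (s$1)), 0, (- 108):])) (p$1)" by (simp add: s1 s2 pderiv_pCons; algebra)
  qed
qed simp_all

lemma case_hyperbolic:
  assumes card: "card {p. lens_map HyperbolicUmbilic (c1,c2,c3) p = s} = 4" and nz: "c1 \<noteq> 0"
  shows "(\<Sum>p\<in>{p. lens_map HyperbolicUmbilic (c1,c2,c3) p = s}. magnification HyperbolicUmbilic (c1,c2,c3) p) = 0"
  unfolding magnification_def jac_HyperbolicUmbilic
proof (rule main_sum[where \<pi>="\<lambda>p. p$1" and Q="[:(- (c1^2 * (s$2)) - 3 * (s$1)^2), (- (c1^3)), (- 18 * (s$1)), 0, (- 27):]" and B="[:c1:]"])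
  show "card {p. lens_map HyperbolicUmbilic (c1,c2,c3) p = s} = degree ([:(- (c1^2 * (s$2)) - 3 * (s$1)^2), (- (c1^3)), (- 18 * (s$1)), 0, (- 27):])" using card by simp
  show "inj_on (\<lambda>p. p$1) {p. lens_map HyperbolicUmbilic (c1,c2,c3) p = s}"
  proof (rule inj_onI)
    fix p q assume p: "p \<in> {p. lens_map HyperbolicUmbilic (c1,c2,c3) p = s}" and q: "q \<in> {p. lens_map HyperbolicUmbilic (c1,c2,c3) p = s}" and pq: "p$1 = q$1"
    from p have ps1: "s$1 = lens_map HyperbolicUmbilic (c1,c2,c3) p $ 1" and ps2: "s$2 = lens_map HyperbolicUmbilic (c1,c2,c3) p $ 2" by auto
    from q have qs1: "s$1 = lens_map HyperbolicUmbilic (c1,c2,c3) q $ 1" and qs2: "s$2 = lens_map HyperbolicUmbilic (c1,c2,c3) q $ 2" by auto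
    have eA: "(c1) * p$2 = (c1) * q$2" using ps1 qs1 pq by (simp add: algebra_simps; algebra)
    have nA: "c1 \<noteq> 0" using nz by simp
    show "p = q" using eA nA pq unfolding vec2_ext by auto
  qed
  show "\<forall>p\<in>{p. lens_map HyperbolicUmbilic (c1,c2,c3) p = s}. poly ([:(- (c1^2 * (s$2)) - 3 * (s$1)^2), (- (c1^3)), (- 18 * (s$1)), 0, (- 27):]) (p$1) = 0"
  proof
    fix p assume p: "p \<in> {p. lens_map HyperbolicUmbilic (c1,c2,c3) p = s}"
    from p have s1: "s$1 = lens_map HyperbolicUmbilic (c1,c2,c3) p $ 1" and s2: "s$2 = lens_map HyperbolicUmbilic (c1,c2,c3) p $ 2" by auto
    show "poly ([:(- (c1^2 * (s$2)) - 3 * (s$1)^2), (- (c1^3)), (- 18 * (s$1)), 0, (- 27):]) (p$1) = 0" by (simp add: s1 s2; algebra)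
  qed
  show "\<forall>p\<in>{p. lens_map HyperbolicUmbilic (c1,c2,c3) p = s}. ((-6*p$1) * (-6*p$2) - (-c1) * (-c1)) * poly ([:c1:]) (p$1) = poly (pderiv ([:(- (c1^2 * (s$2)) - 3 * (s$1)^2), (- (c1^3)), (- 18 * (s$1)), 0, (- 27):])) (p$1)"
  proof
    fix p assume p: "p \<in> {p. lens_map HyperbolicUmbilic (c1,c2,c3) p = s}"
    from p have s1: "s$1 = lens_map HyperbolicUmbilic (c1,c2,c3) p $ 1" and s2: "s$2 = lens_map HyperbolicUmbilic (c1,c2,c3) p $ 2" by auto
    show "((-6*p$1) * (-6*p$2) - (-c1) * (-c1)) * poly ([:c1:]) (p$1) = poly (pderiv ([:(- (c1^2 * (s$2)) - 3 * (s$1)^2), (- (c1^3)), (- 18 * (s$1)), 0, (- 27):])) (p$1)" by (simp add: s1 s2 pderiv_pCons; algebra)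
  qed
qed simp_all

lemma case_parabolic:
  assumes card: "card {p. lens_map ParabolicUmbilic (c1,c2,c3) p = s} = 5" and nz: "s$1 \<noteq> 0"
  shows "(\<Sum>p\<in>{p. lens_map ParabolicUmbilic (c1,c2,c3) p = s}. magnification ParabolicUmbilic (c1,c2,c3) p) = 0"
  unfolding magnification_def jac_ParabolicUmbilic
proof (rule main_sum[where \<pi>="\<lambda>p. p$2" and Q="[:(- 4 * c1^2 * (s$2) + (s$1)^2), (- 8 * c1 * (s$2) + 8 * c1^2 * c2), (16 * c1 * c2 - 4 * (s$2)), (16 * c1^2 + 8 * c2), (32 * c1), (16):]" and B="[:2 * c1, 2:]"])
  show "card {p. lens_map ParabolicUmbilic (c1,c2,c3) p = s} = degree ([:(- 4 * c1^2 * (s$2) + (s$1)^2), (- 8 * c1 * (s$2) + 8 * c1^2 * c2), (16 * c1 * c2 - 4 * (s$2)), (16 * c1^2 + 8 * c2), (32 * c1), (16):])" using card by simp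
  show "inj_on (\<lambda>p. p$2) {p. lens_map ParabolicUmbilic (c1,c2,c3) p = s}"
  proof (rule inj_onI)
    fix p q assume p: "p \<in> {p. lens_map ParabolicUmbilic (c1,c2,c3) p = s}" and q: "q \<in> {p. lens_map ParabolicUmbilic (c1,c2,c3) p = s}" and pq: "p$2 = q$2"
    from p have ps1: "s$1 = lens_map ParabolicUmbilic (c1,c2,c3) p $ 1" and ps2: "s$2 = lens_map ParabolicUmbilic (c1,c2,c3) p $ 2" by auto
    from q have qs1: "s$1 = lens_map ParabolicUmbilic (c1,c2,c3) q $ 1" and qs2: "s$2 = lens_map ParabolicUmbilic (c1,c2,c3) q $ 2" by auto
    have eA: "(c1 + p$2) * p$1 = (c1 + p$2) * q$1" using ps1 qs1 pq by (simp add: algebra_simps; algebra)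
    have nA: "c1 + p$2 \<noteq> 0" proof
      assume "c1 + p$2 = 0"
      moreover have "s$1 = (c1 + p$2) * (2 * p$1)" using ps1 by (simp add: algebra_simps)
      ultimately show False using nz by simp
    qed
    show "p = q" using eA nA pq unfolding vec2_ext by auto
  qed
  show "\<forall>p\<in>{p. lens_map ParabolicUmbilic (c1,c2,c3) p = s}. poly ([:(- 4 * c1^2 * (s$2) + (s$1)^2), (- 8 * c1 * (s$2) + 8 * c1^2 * c2), (16 * c1 * c2 - 4 * (s$2)), (16 * c1^2 + 8 * c2), (32 * c1), (16):]) (p$2) = 0"
  proof
    fix p assume p: "p \<in> {p. lens_map ParabolicUmbilic (c1,c2,c3) p = s}"
    from p have s1: "s$1 = lens_map ParabolicUmbilic (c1,c2,c3) p $ 1" and s2: "s$2 = lens_map ParabolicUmbilic (c1,c2,c3) p $ 2" by auto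
    show "poly ([:(- 4 * c1^2 * (s$2) + (s$1)^2), (- 8 * c1 * (s$2) + 8 * c1^2 * c2), (16 * c1 * c2 - 4 * (s$2)), (16 * c1^2 + 8 * c2), (32 * c1), (16):]) (p$2) = 0" by (simp add: s1 s2; algebra)
  qed
  show "\<forall>p\<in>{p. lens_map ParabolicUmbilic (c1,c2,c3) p = s}. ((2*c1 + 2*p$2) * (2*c2 + 12*(p$2)^2) - (2*p$1) * (2*p$1)) * poly ([:2 * c1, 2:]) (p$2) = poly (pderiv ([:(- 4 * c1^2 * (s$2) + (s$1)^2), (- 8 * c1 * (s$2) + 8 * c1^2 * c2), (16 * c1 * c2 - 4 * (s$2)), (16 * c1^2 + 8 * c2), (32 * c1), (16):])) (p$2)"
  proof
    fix p assume p: "p \<in> {p. lens_map ParabolicUmbilic (c1,c2,c3) p = s}"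
    from p have s1: "s$1 = lens_map ParabolicUmbilic (c1,c2,c3) p $ 1" and s2: "s$2 = lens_map ParabolicUmbilic (c1,c2,c3) p $ 2" by auto
    show "((2*c1 + 2*p$2) * (2*c2 + 12*(p$2)^2) - (2*p$1) * (2*p$1)) * poly ([:2 * c1, 2:]) (p$2) = poly (pderiv ([:(- 4 * c1^2 * (s$2) + (s$1)^2), (- 8 * c1 * (s$2) + 8 * c1^2 * c2), (16 * c1 * c2 - 4 * (s$2)), (16 * c1^2 + 8 * c2), (32 * c1), (16):])) (p$2)" by (simp add: s1 s2 pderiv_pCons; algebra)
  qed
qed simp_all

lemma case_symbolic:
  assumes card: "card {p. lens_map SymbolicUmbilic (c1,c2,c3) p = s} = 6" and nz: "\<forall>p\<in>{p. lens_map SymbolicUmbilic (c1,c2,c3) p = s}. 2 * c1 * p$2 + c2 \<noteq> 0"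
  shows "(\<Sum>p\<in>{p. lens_map SymbolicUmbilic (c1,c2,c3) p = s}. magnification SymbolicUmbilic (c1,c2,c3) p) = 0"
  unfolding magnification_def jac_SymbolicUmbilic
proof (rule main_sum[where \<pi>="\<lambda>p. p$2" and Q="[:(- (c2^2 * (s$1)) - 3 * (s$2)^2), (- 4 * c1 * c2 * (s$1) - c2^3 - 12 * c3 * (s$2)), (- 5 * c1 * c2^2 - 4 * c1^2 * (s$1) - 12 * c3^2), (- 8 * c1^2 * c2 - 24 * (s$2)), (- 4 * c1^3 - 48 * c3), 0, (- 48):]" and B="[:c2, 2 * c1:]"])
  show "card {p. lens_map SymbolicUmbilic (c1,c2,c3) p = s} = degree ([:(- (c2^2 * (s$1)) - 3 * (s$2)^2), (- 4 * c1 * c2 * (s$1) - c2^3 - 12 * c3 * (s$2)), (- 5 * c1 * c2^2 - 4 * c1^2 * (s$1) - 12 * c3^2), (- 8 * c1^2 * c2 - 24 * (s$2)), (- 4 * c1^3 - 48 * c3), 0, (- 48):])" using card by simp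
  show "inj_on (\<lambda>p. p$2) {p. lens_map SymbolicUmbilic (c1,c2,c3) p = s}"
  proof (rule inj_onI)
    fix p q assume p: "p \<in> {p. lens_map SymbolicUmbilic (c1,c2,c3) p = s}" and q: "q \<in> {p. lens_map SymbolicUmbilic (c1,c2,c3) p = s}" and pq: "p$2 = q$2"
    from p have ps1: "s$1 = lens_map SymbolicUmbilic (c1,c2,c3) p $ 1" and ps2: "s$2 = lens_map SymbolicUmbilic (c1,c2,c3) p $ 2" by auto
    from q have qs1: "s$1 = lens_map SymbolicUmbilic (c1,c2,c3) q $ 1" and qs2: "s$2 = lens_map SymbolicUmbilic (c1,c2,c3) q $ 2" by auto
    have eA: "(2 * c1 * p$2 + c2) * p$1 = (2 * c1 * p$2 + c2) * q$1" using ps2 qs2 pq by (simp add: algebra_simps; algebra)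
    have nA: "2 * c1 * p$2 + c2 \<noteq> 0" using nz p by simp
    show "p = q" using eA nA pq unfolding vec2_ext by auto
  qed
  show "\<forall>p\<in>{p. lens_map SymbolicUmbilic (c1,c2,c3) p = s}. poly ([:(- (c2^2 * (s$1)) - 3 * (s$2)^2), (- 4 * c1 * c2 * (s$1) - c2^3 - 12 * c3 * (s$2)), (- 5 * c1 * c2^2 - 4 * c1^2 * (s$1) - 12 * c3^2), (- 8 * c1^2 * c2 - 24 * (s$2)), (- 4 * c1^3 - 48 * c3), 0, (- 48):]) (p$2) = 0"
  proof
    fix p assume p: "p \<in> {p. lens_map SymbolicUmbilic (c1,c2,c3) p = s}"
    from p have s1: "s$1 = lens_map SymbolicUmbilic (c1,c2,c3) p $ 1" and s2: "s$2 = lens_map SymbolicUmbilic (c1,c2,c3) p $ 2" by auto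
    show "poly ([:(- (c2^2 * (s$1)) - 3 * (s$2)^2), (- 4 * c1 * c2 * (s$1) - c2^3 - 12 * c3 * (s$2)), (- 5 * c1 * c2^2 - 4 * c1^2 * (s$1) - 12 * c3^2), (- 8 * c1^2 * c2 - 24 * (s$2)), (- 4 * c1^3 - 48 * c3), 0, (- 48):]) (p$2) = 0" by (simp add: s1 s2; algebra)
  qed
  show "\<forall>p\<in>{p. lens_map SymbolicUmbilic (c1,c2,c3) p = s}. ((-6*p$1) * (-12*(p$2)^2 - 2*c1*p$1 - 2*c3) - (-2*c1*p$2 - c2) * (-2*c1*p$2 - c2)) * poly ([:c2, 2 * c1:]) (p$2) = poly (pderiv ([:(- (c2^2 * (s$1)) - 3 * (s$2)^2), (- 4 * c1 * c2 * (s$1) - c2^3 - 12 * c3 * (s$2)), (- 5 * c1 * c2^2 - 4 * c1^2 * (s$1) - 12 * c3^2), (- 8 * c1^2 * c2 - 24 * (s$2)), (- 4 * c1^3 - 48 * c3), 0, (- 48):])) (p$2)"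
  proof
    fix p assume p: "p \<in> {p. lens_map SymbolicUmbilic (c1,c2,c3) p = s}"
    from p have s1: "s$1 = lens_map SymbolicUmbilic (c1,c2,c3) p $ 1" and s2: "s$2 = lens_map SymbolicUmbilic (c1,c2,c3) p $ 2" by auto
    show "((-6*p$1) * (-12*(p$2)^2 - 2*c1*p$1 - 2*c3) - (-2*c1*p$2 - c2) * (-2*c1*p$2 - c2)) * poly ([:c2, 2 * c1:]) (p$2) = poly (pderiv ([:(- (c2^2 * (s$1)) - 3 * (s$2)^2), (- 4 * c1 * c2 * (s$1) - c2^3 - 12 * c3 * (s$2)), (- 5 * c1 * c2^2 - 4 * c1^2 * (s$1) - 12 * c3^2), (- 8 * c1^2 * c2 - 24 * (s$2)), (- 4 * c1^3 - 48 * c3), 0, (- 48):])) (p$2)" by (simp add: s1 s2 pderiv_pCons; algebra)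
  qed
qed simp_all

lemma case_eu2:
  assumes card: "card {p. lens_map EllipticUmbilic2 (c1,c2,c3) p = s} = 6" and nz: "s$1 \<noteq> 0"
  shows "(\<Sum>p\<in>{p. lens_map EllipticUmbilic2 (c1,c2,c3) p = s}. magnification EllipticUmbilic2 (c1,c2,c3) p) = 0"
  unfolding magnification_def jac_EllipticUmbilic2
proof (rule main_sum[where \<pi>="\<lambda>p. p$2" and Q="[:(- ((s$1)^2)), 0, (- 4 * (s$2)), (- 8 * c3), (- 12 * c2), (- 16 * c1), (20):]" and B="[:0, -2:]"])
  show "card {p. lens_map EllipticUmbilic2 (c1,c2,c3) p = s} = degree ([:(- ((s$1)^2)), 0, (- 4 * (s$2)), (- 8 * c3), (- 12 * c2), (- 16 * c1), (20):])" using card by simp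
  show "inj_on (\<lambda>p. p$2) {p. lens_map EllipticUmbilic2 (c1,c2,c3) p = s}"
  proof (rule inj_onI)
    fix p q assume p: "p \<in> {p. lens_map EllipticUmbilic2 (c1,c2,c3) p = s}" and q: "q \<in> {p. lens_map EllipticUmbilic2 (c1,c2,c3) p = s}" and pq: "p$2 = q$2"
    from p have ps1: "s$1 = lens_map EllipticUmbilic2 (c1,c2,c3) p $ 1" and ps2: "s$2 = lens_map EllipticUmbilic2 (c1,c2,c3) p $ 2" by auto
    from q have qs1: "s$1 = lens_map EllipticUmbilic2 (c1,c2,c3) q $ 1" and qs2: "s$2 = lens_map EllipticUmbilic2 (c1,c2,c3) q $ 2" by auto
    have eA: "(p$2) * p$1 = (p$2) * q$1" using ps1 qs1 pq by (simp add: algebra_simps; algebra)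
    have nA: "p$2 \<noteq> 0" proof
      assume "p$2 = 0"
      moreover have "s$1 = (p$2) * (- 2 * p$1)" using ps1 by (simp add: algebra_simps)
      ultimately show False using nz by simp
    qed
    show "p = q" using eA nA pq unfolding vec2_ext by auto
  qed
  show "\<forall>p\<in>{p. lens_map EllipticUmbilic2 (c1,c2,c3) p = s}. poly ([:(- ((s$1)^2)), 0, (- 4 * (s$2)), (- 8 * c3), (- 12 * c2), (- 16 * c1), (20):]) (p$2) = 0"
  proof
    fix p assume p: "p \<in> {p. lens_map EllipticUmbilic2 (c1,c2,c3) p = s}"
    from p have s1: "s$1 = lens_map EllipticUmbilic2 (c1,c2,c3) p $ 1" and s2: "s$2 = lens_map EllipticUmbilic2 (c1,c2,c3) p $ 2" by auto
    show "poly ([:(- ((s$1)^2)), 0, (- 4 * (s$2)), (- 8 * c3), (- 12 * c2), (- 16 * c1), (20):]) (p$2) = 0" by (simp add: s1 s2; algebra)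
  qed
  show "\<forall>p\<in>{p. lens_map EllipticUmbilic2 (c1,c2,c3) p = s}. ((-2*p$2) * (20*(p$2)^3 - 12*c1*(p$2)^2 - 6*c2*p$2 - 2*c3) - (-2*p$1) * (-2*p$1)) * poly ([:0, -2:]) (p$2) = poly (pderiv ([:(- ((s$1)^2)), 0, (- 4 * (s$2)), (- 8 * c3), (- 12 * c2), (- 16 * c1), (20):])) (p$2)"
  proof
    fix p assume p: "p \<in> {p. lens_map EllipticUmbilic2 (c1,c2,c3) p = s}"
    from p have s1: "s$1 = lens_map EllipticUmbilic2 (c1,c2,c3) p $ 1" and s2: "s$2 = lens_map EllipticUmbilic2 (c1,c2,c3) p $ 2" by auto
    show "((-2*p$2) * (20*(p$2)^3 - 12*c1*(p$2)^2 - 6*c2*p$2 - 2*c3) - (-2*p$1) * (-2*p$1)) * poly ([:0, -2:]) (p$2) = poly (pderiv ([:(- ((s$1)^2)), 0, (- 4 * (s$2)), (- 8 * c3), (- 12 * c2), (- 16 * c1), (20):])) (p$2)" by (simp add: s1 s2 pderiv_pCons; algebra)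
  qed
qed simp_all

lemma case_hu2:
  assumes card: "card {p. lens_map HyperbolicUmbilic2 (c1,c2,c3) p = s} = 6" and nz: "s$1 \<noteq> 0"
  shows "(\<Sum>p\<in>{p. lens_map HyperbolicUmbilic2 (c1,c2,c3) p = s}. magnification HyperbolicUmbilic2 (c1,c2,c3) p) = 0"
  unfolding magnification_def jac_HyperbolicUmbilic2
proof (rule main_sum[where \<pi>="\<lambda>p. p$2" and Q="[:(- ((s$1)^2)), 0, (- 4 * (s$2)), (- 8 * c3), (- 12 * c2), (- 16 * c1), (- 20):]" and B="[:0, -2:]"])
  show "card {p. lens_map HyperbolicUmbilic2 (c1,c2,c3) p = s} = degree ([:(- ((s$1)^2)), 0, (- 4 * (s$2)), (- 8 * c3), (- 12 * c2), (- 16 * c1), (- 20):])" using card by simp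
  show "inj_on (\<lambda>p. p$2) {p. lens_map HyperbolicUmbilic2 (c1,c2,c3) p = s}"
  proof (rule inj_onI)
    fix p q assume p: "p \<in> {p. lens_map HyperbolicUmbilic2 (c1,c2,c3) p = s}" and q: "q \<in> {p. lens_map HyperbolicUmbilic2 (c1,c2,c3) p = s}" and pq: "p$2 = q$2"
    from p have ps1: "s$1 = lens_map HyperbolicUmbilic2 (c1,c2,c3) p $ 1" and ps2: "s$2 = lens_map HyperbolicUmbilic2 (c1,c2,c3) p $ 2" by auto
    from q have qs1: "s$1 = lens_map HyperbolicUmbilic2 (c1,c2,c3) q $ 1" and qs2: "s$2 = lens_map HyperbolicUmbilic2 (c1,c2,c3) q $ 2" by auto
    have eA: "(p$2) * p$1 = (p$2) * q$1" using ps1 qs1 pq by (simp add: algebra_simps; algebra)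
    have nA: "p$2 \<noteq> 0" proof
      assume "p$2 = 0"
      moreover have "s$1 = (p$2) * (- 2 * p$1)" using ps1 by (simp add: algebra_simps)
      ultimately show False using nz by simp
    qed
    show "p = q" using eA nA pq unfolding vec2_ext by auto
  qed
  show "\<forall>p\<in>{p. lens_map HyperbolicUmbilic2 (c1,c2,c3) p = s}. poly ([:(- ((s$1)^2)), 0, (- 4 * (s$2)), (- 8 * c3), (- 12 * c2), (- 16 * c1), (- 20):]) (p$2) = 0"
  proof
    fix p assume p: "p \<in> {p. lens_map HyperbolicUmbilic2 (c1,c2,c3) p = s}"
    from p have s1: "s$1 = lens_map HyperbolicUmbilic2 (c1,c2,c3) p $ 1" and s2: "s$2 = lens_map HyperbolicUmbilic2 (c1,c2,c3) p $ 2" by auto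
    show "poly ([:(- ((s$1)^2)), 0, (- 4 * (s$2)), (- 8 * c3), (- 12 * c2), (- 16 * c1), (- 20):]) (p$2) = 0" by (simp add: s1 s2; algebra)
  qed
  show "\<forall>p\<in>{p. lens_map HyperbolicUmbilic2 (c1,c2,c3) p = s}. ((-2*p$2) * (-20*(p$2)^3 - 12*c1*(p$2)^2 - 6*c2*p$2 - 2*c3) - (-2*p$1) * (-2*p$1)) * poly ([:0, -2:]) (p$2) = poly (pderiv ([:(- ((s$1)^2)), 0, (- 4 * (s$2)), (- 8 * c3), (- 12 * c2), (- 16 * c1), (- 20):])) (p$2)"
  proof
    fix p assume p: "p \<in> {p. lens_map HyperbolicUmbilic2 (c1,c2,c3) p = s}"
    from p have s1: "s$1 = lens_map HyperbolicUmbilic2 (c1,c2,c3) p $ 1" and s2: "s$2 = lens_map HyperbolicUmbilic2 (c1,c2,c3) p $ 2" by auto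
    show "((-2*p$2) * (-20*(p$2)^3 - 12*c1*(p$2)^2 - 6*c2*p$2 - 2*c3) - (-2*p$1) * (-2*p$1)) * poly ([:0, -2:]) (p$2) = poly (pderiv ([:(- ((s$1)^2)), 0, (- 4 * (s$2)), (- 8 * c3), (- 12 * c2), (- 16 * c1), (- 20):])) (p$2)" by (simp add: s1 s2 pderiv_pCons; algebra)
  qed
qed simp_all

lemma card_le_roots:
  fixes \<pi> :: "'a \<Rightarrow> real"
  assumes "inj_on \<pi> A" "\<forall>p\<in>A. poly g (\<pi> p) = 0" "g \<noteq> 0"
  shows "card A \<le> degree g"
proof -
  have "card A = card (\<pi> ` A)" using card_image[OF assms(1)] by simp
  also have "\<dots> \<le> card {x. poly g x = 0}"
    by (rule card_mono[OF poly_roots_finite[OF assms(3)]]) (use assms(2) in auto)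
  also have "\<dots> \<le> degree g" by (rule card_poly_roots_bound[OF assms(3)])
  finally show ?thesis .
qed

lemma split2:
  assumes "finite S" "card S = n1 + n2" "card {p\<in>S. P p} \<le> n1" "card {p\<in>S. \<not> P p} \<le> n2"
  shows "card {p\<in>S. P p} = n1 \<and> card {p\<in>S. \<not> P p} = n2"
proof -
  have "S = {p\<in>S. P p} \<union> {p\<in>S. \<not> P p}" by auto
  then have "card S = card {p\<in>S. P p} + card {p\<in>S. \<not> P p}"
    using assms(1) by (metis (no_types, lifting) card_Un_disjoint disjoint_iff finite_Un mem_Collect_eq)
  then show ?thesis using assms by linarith
qed

lemma sum_split2:
  assumes "finite S"
  shows "sum f S = sum f {p\<in>S. P p} + sum f {p\<in>S. \<not> P p}"
proof -
  have "S = {p\<in>S. P p} \<union> {p\<in>S. \<not> P p}" by auto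
  then show ?thesis using assms
    by (metis (no_types, lifting) sum.union_disjoint disjoint_iff finite_Un mem_Collect_eq)
qed

lemma sum_odd_inv:
  fixes f :: "'a \<Rightarrow> real"
  assumes "\<forall>p\<in>S. \<sigma> p \<in> S" "\<forall>p. \<sigma> (\<sigma> p) = p" "\<forall>p\<in>S. f (\<sigma> p) = - f p"
  shows "sum f S = 0"
proof -
  have "bij_betw \<sigma> S S"
    by (rule bij_betw_byWitness[where f'=\<sigma>]) (use assms in auto)
  then have "sum f S = sum (f \<circ> \<sigma>) S" by (simp add: sum.reindex_bij_betw)
  also have "\<dots> = - sum f S" using assms(3) by (simp add: sum_negf)
  finally show ?thesis by simp
qed

lemma memS: "p \<in> {p. lens_map k c p = s} \<longleftrightarrow> s$1 = lens_map k c p $ 1 \<and> s$2 = lens_map k c p $ 2"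
  by (auto simp: vec2_ext)

lemma case_elliptic0:
  assumes card: "card {p. lens_map EllipticUmbilic (c1,c2,c3) p = s} = 4" and z: "s$2 = 0"
  shows "(\<Sum>p\<in>{p. lens_map EllipticUmbilic (c1,c2,c3) p = s}. magnification EllipticUmbilic (c1,c2,c3) p) = 0"
  unfolding magnification_def jac_EllipticUmbilic
proof -
  let ?S = "{p. lens_map EllipticUmbilic (c1,c2,c3) p = s}"
  define J where "J p = (-6*p$1 - 2*c1) * (6*p$1 - 2*c1) - (6*p$2) * (6*p$2)" for p :: "real^2"
  have fin: "finite ?S" using card by (metis card.infinite zero_neq_numeral)
  have mem: "p \<in> ?S \<longleftrightarrow> s$1 = 3 * (p$2)^2 - 3 * (p$1)^2 - 2 * c1 * p$1 \<and> s$2 = 6 * p$1 * p$2 - 2 * c1 * p$2" for p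
    unfolding memS by simp
  define A where "A = {p\<in>?S. p$2 = 0}"
  define B where "B = {p\<in>?S. \<not> p$2 = 0}"
  have Ap: "p$2 = 0 \<and> poly [:s$1, 2*c1, 3:] (p$1) = 0" if "p \<in> A" for p
    using that unfolding A_def mem by (auto simp: algebra_simps power2_eq_square)
  have Bp: "p$1 = c1/3 \<and> poly [:-(s$1 + c1^2), 0, 3:] (p$2) = 0" if "p \<in> B" for p
  proof -
    from that have y: "p$2 \<noteq> 0" and e1: "s$1 = 3 * (p$2)^2 - 3 * (p$1)^2 - 2 * c1 * p$1"
      and e2: "0 = (6 * p$1 - 2 * c1) * p$2" unfolding B_def mem using z by (auto simp: algebra_simps)
    from e2 y have x: "p$1 = c1/3" by simp
    show ?thesis using e1 x by (simp add: algebra_simps power2_eq_square)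
  qed
  have cA: "card A \<le> 2"
    using card_le_roots[of "\<lambda>p. p$1" A "[:s$1, 2*c1, 3:]"] Ap
    by (fastforce simp: inj_on_def vec2_ext)
  have cB: "card B \<le> 2"
  proof -
    have "card B \<le> degree [:-(s$1 + c1^2), 0, 3:]"
    proof (rule card_le_roots[where \<pi>="\<lambda>p. p$2"])
      show "inj_on (\<lambda>p. p$2) B"
      proof (rule inj_onI)
        fix p q assume "p \<in> B" "q \<in> B" "p$2 = q$2"
        then show "p = q" using Bp[of p] Bp[of q] by (simp add: vec2_ext)
      qed
    qed (use Bp in auto)
    then show ?thesis by simp
  qed
  have cards: "card A = 2 \<and> card B = 2"
    using split2[OF fin _ cA[unfolded A_def] cB[unfolded B_def]] card unfolding A_def B_def by simp
  obtain b where b: "b \<in> B" using cards by fastforce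
  have pos: "s$1 + c1^2 \<noteq> 0"
  proof -
    have "b$2 \<noteq> 0" using b B_def by simp
    then have "3 * (b$2)^2 \<noteq> 0" by simp
    moreover have "3 * (b$2)^2 = s$1 + c1^2" using Bp[OF b] by (simp add: algebra_simps power2_eq_square)
    ultimately show ?thesis by simp
  qed
  have sA: "(\<Sum>p\<in>A. 1 / J p) = 1 / (6 * poly [:s$1, 2*c1, 3:] (c1/3))"
  proof (rule pf_sum[where \<pi>="\<lambda>p. p$1"])
    show "card A = degree [:s$1, 2*c1, 3:]" using cards by simp
    show "inj_on (\<lambda>p. p$1) A" using Ap by (fastforce simp: inj_on_def vec2_ext)
    show "\<forall>p\<in>A. poly [:s$1, 2*c1, 3:] (p$1) = 0" using Ap by blast
    show "poly [:s$1, 2*c1, 3:] (c1/3) \<noteq> 0" using pos by (simp add: algebra_simps power2_eq_square)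
    show "\<forall>p\<in>A. J p = 6 * (c1/3 - p$1) * poly (pderiv [:s$1, 2*c1, 3:]) (p$1)"
      using Ap by (auto simp: J_def pderiv_pCons algebra_simps)
  qed simp_all
  have sB: "(\<Sum>p\<in>B. 1 / J p) = 2 * (1 / (-12 * (s$1 + c1^2)))"
  proof -
    have "\<forall>p\<in>B. J p = -12 * (s$1 + c1^2)"
    proof
      fix p assume "p \<in> B"
      then have x: "p$1 = c1/3" and y: "3 * (p$2)^2 = s$1 + c1^2"
        using Bp[of p] by (auto simp: algebra_simps power2_eq_square)
      show "J p = -12 * (s$1 + c1^2)" unfolding J_def x y[symmetric] by (simp add: algebra_simps power2_eq_square)
    qed
    then have "(\<Sum>p\<in>B. 1 / J p) = (\<Sum>p\<in>B. 1 / (-12 * (s$1 + c1^2)))" by simp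
    then show ?thesis using cards by simp
  qed
  have "(\<Sum>p\<in>?S. 1 / J p) = (\<Sum>p\<in>A. 1 / J p) + (\<Sum>p\<in>B. 1 / J p)"
    unfolding A_def B_def by (rule sum_split2[OF fin])
  also have "\<dots> = 0" unfolding sA sB using pos
    by (simp add: field_simps power2_eq_square)
  finally show "(\<Sum>p\<in>?S. 1 / ((-6*p$1 - 2*c1) * (6*p$1 - 2*c1) - (6*p$2) * (6*p$2))) = 0"
    unfolding J_def .
qed

lemma case_parabolic0:
  assumes card: "card {p. lens_map ParabolicUmbilic (c1,c2,c3) p = s} = 5" and z: "s$1 = 0"
  shows "(\<Sum>p\<in>{p. lens_map ParabolicUmbilic (c1,c2,c3) p = s}. magnification ParabolicUmbilic (c1,c2,c3) p) = 0"
  unfolding magnification_def jac_ParabolicUmbilic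
proof -
  let ?S = "{p. lens_map ParabolicUmbilic (c1,c2,c3) p = s}"
  define J where "J p = (2*c1 + 2*p$2) * (2*c2 + 12*(p$2)^2) - (2*p$1) * (2*p$1)" for p :: "real^2"
  have fin: "finite ?S" using card by (metis card.infinite zero_neq_numeral)
  have mem: "p \<in> ?S \<longleftrightarrow> s$1 = 2 * c1 * p$1 + 2 * p$1 * p$2 \<and> s$2 = 2 * c2 * p$2 + (p$1)^2 + 4 * (p$2)^3" for p
    unfolding memS by simp
  define A where "A = {p\<in>?S. p$1 = 0}"
  define B where "B = {p\<in>?S. \<not> p$1 = 0}"
  have Ap: "p$1 = 0 \<and> poly ([:-(s$2), 2 * c2, 0, 4:]) (p$2) = 0" if "p \<in> A" for p
  proof -
    from that have x: "p$1 = 0" and e1: "s$1 = 2 * c1 * p$1 + 2 * p$1 * p$2" and e2: "s$2 = 2 * c2 * p$2 + (p$1)^2 + 4 * (p$2)^3"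
      unfolding A_def mem by auto
    show ?thesis using e1 e2 x z by (simp add: algebra_simps power2_eq_square power3_eq_cube power4_eq_xxxx)
  qed
  have Bp: "p$2 = - c1 \<and> poly ([:-(s$2 + 2 * c1 * c2 + 4 * c1^3), 0, 1:]) (p$1) = 0" if "p \<in> B" for p
  proof -
    from that have y: "p$1 \<noteq> 0" and e1: "s$1 = 2 * c1 * p$1 + 2 * p$1 * p$2" and e2: "s$2 = 2 * c2 * p$2 + (p$1)^2 + 4 * (p$2)^3"
      unfolding B_def mem by auto
    have "p$1 * (c1 + p$2) = 0" using e1 z by (simp add: algebra_simps)
    then have x: "p$2 = - c1" using y by (simp add: add_eq_0_iff)
    show ?thesis using e1 e2 x z by (simp add: algebra_simps power2_eq_square power3_eq_cube power4_eq_xxxx)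
  qed
  have cA: "card A \<le> 3"
  proof -
    have "card A \<le> degree ([:-(s$2), 2 * c2, 0, 4:])"
    proof (rule card_le_roots[where \<pi>="\<lambda>p. p$2"])
      show "inj_on (\<lambda>p. p$2) A"
      proof (rule inj_onI)
        fix p q assume "p \<in> A" "q \<in> A" "p$2 = q$2"
        then show "p = q" using Ap[of p] Ap[of q] by (auto simp: vec2_ext)
      qed
    qed (use Ap in auto)
    then show ?thesis by simp
  qed
  have cB: "card B \<le> 2"
  proof -
    have "card B \<le> degree ([:-(s$2 + 2 * c1 * c2 + 4 * c1^3), 0, 1:])"
    proof (rule card_le_roots[where \<pi>="\<lambda>p. p$1"])
      show "inj_on (\<lambda>p. p$1) B"
      proof (rule inj_onI)
        fix p q assume "p \<in> B" "q \<in> B" "p$1 = q$1"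
        then show "p = q" using Bp[of p] Bp[of q] by (auto simp: vec2_ext)
      qed
    qed (use Bp in auto)
    then show ?thesis by simp
  qed
  have cards: "card A = 3 \<and> card B = 2"
    using split2[OF fin _ cA[unfolded A_def] cB[unfolded B_def]] card unfolding A_def B_def by simp
  obtain b where b: "b \<in> B" using cards by fastforce
  have Xsq: "(b$1)^2 = s$2 + 2 * c1 * c2 + 4 * c1^3" using Bp[OF b] by (simp add: algebra_simps power2_eq_square)
  have pos: "s$2 + 2 * c1 * c2 + 4 * c1^3 \<noteq> 0"
  proof -
    have "b$1 \<noteq> 0" using b B_def Bp[OF b] by auto
    then have "(b$1)^2 \<noteq> 0" by simp
    then show ?thesis unfolding Xsq .
  qed
  have sA: "(\<Sum>p\<in>A. 1 / J p) = 1 / ((-2) * poly ([:-(s$2), 2 * c2, 0, 4:]) (- c1))"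
  proof (rule pf_sum[where \<pi>="\<lambda>p. p$2"])
    show "card A = degree ([:-(s$2), 2 * c2, 0, 4:])" using cards by simp
    show "inj_on (\<lambda>p. p$2) A"
    proof (rule inj_onI)
      fix p q assume "p \<in> A" "q \<in> A" "p$2 = q$2"
      then show "p = q" using Ap[of p] Ap[of q] by (auto simp: vec2_ext)
    qed
    show "\<forall>p\<in>A. poly ([:-(s$2), 2 * c2, 0, 4:]) (p$2) = 0" using Ap by blast
    show "poly ([:-(s$2), 2 * c2, 0, 4:]) (- c1) \<noteq> 0" using pos by (simp add: algebra_simps power2_eq_square power3_eq_cube power4_eq_xxxx)
    show "\<forall>p\<in>A. J p = (-2) * (- c1 - p$2) * poly (pderiv ([:-(s$2), 2 * c2, 0, 4:])) (p$2)"
    proof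
      fix p assume "p \<in> A"
      then have x: "p$1 = 0" using Ap by blast
      show "J p = (-2) * (- c1 - p$2) * poly (pderiv ([:-(s$2), 2 * c2, 0, 4:])) (p$2)"
        unfolding J_def x by (simp add: pderiv_pCons algebra_simps power2_eq_square power3_eq_cube)
    qed
  qed simp_all
  have sB: "(\<Sum>p\<in>B. 1 / J p) = 2 * (1 / (-4 * (s$2 + 2 * c1 * c2 + 4 * c1^3)))"
  proof -
    have "\<forall>p\<in>B. J p = -4 * (s$2 + 2 * c1 * c2 + 4 * c1^3)"
    proof
      fix p assume "p \<in> B"
      then have x: "p$2 = - c1" and y: "(p$1)^2 = s$2 + 2 * c1 * c2 + 4 * c1^3"
        using Bp[OF \<open>p \<in> B\<close>] by (simp_all add: algebra_simps power2_eq_square)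
      show "J p = -4 * (s$2 + 2 * c1 * c2 + 4 * c1^3)" unfolding J_def x using y by (simp add: algebra_simps power2_eq_square; linarith?)
    qed
    then have "(\<Sum>p\<in>B. 1 / J p) = (\<Sum>p\<in>B. 1 / (-4 * (s$2 + 2 * c1 * c2 + 4 * c1^3)))" by simp
    then show ?thesis using cards by simp
  qed
  have "(\<Sum>p\<in>?S. 1 / J p) = (\<Sum>p\<in>A. 1 / J p) + (\<Sum>p\<in>B. 1 / J p)"
    unfolding A_def B_def by (rule sum_split2[OF fin])
  also have "\<dots> = 0" unfolding sA sB using pos
    by (simp add: field_simps power2_eq_square power3_eq_cube)
  finally show "(\<Sum>p\<in>?S. 1 / ((2*c1 + 2*p$2) * (2*c2 + 12*(p$2)^2) - (2*p$1) * (2*p$1))) = 0"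
    unfolding J_def .
qed

lemma case_EllipticUmbilic20:
  assumes card: "card {p. lens_map EllipticUmbilic2 (c1,c2,c3) p = s} = 6" and z: "s$1 = 0"
  shows "(\<Sum>p\<in>{p. lens_map EllipticUmbilic2 (c1,c2,c3) p = s}. magnification EllipticUmbilic2 (c1,c2,c3) p) = 0"
  unfolding magnification_def jac_EllipticUmbilic2
proof -
  let ?S = "{p. lens_map EllipticUmbilic2 (c1,c2,c3) p = s}"
  define J where "J p = (-2*p$2) * (20*(p$2)^3 - 12*c1*(p$2)^2 - 6*c2*p$2 - 2*c3) - (-2*p$1) * (-2*p$1)" for p :: "real^2"
  have fin: "finite ?S" using card by (metis card.infinite zero_neq_numeral)
  have mem: "p \<in> ?S \<longleftrightarrow> s$1 = - 2 * p$1 * p$2 \<and> s$2 = - ((p$1)^2) + 5 * (p$2)^4 - 4 * c1 * (p$2)^3 - 3 * c2 * (p$2)^2 - 2 * c3 * p$2" for p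
    unfolding memS by simp
  define A where "A = {p\<in>?S. p$1 = 0}"
  define B where "B = {p\<in>?S. \<not> p$1 = 0}"
  have Ap: "p$1 = 0 \<and> poly ([:-(s$2), -2 * c3, -3 * c2, -4 * c1, 5:]) (p$2) = 0" if "p \<in> A" for p
  proof -
    from that have x: "p$1 = 0" and e1: "s$1 = - 2 * p$1 * p$2" and e2: "s$2 = - ((p$1)^2) + 5 * (p$2)^4 - 4 * c1 * (p$2)^3 - 3 * c2 * (p$2)^2 - 2 * c3 * p$2"
      unfolding A_def mem by auto
    show ?thesis using e1 e2 x z by (simp add: algebra_simps power2_eq_square power3_eq_cube power4_eq_xxxx)
  qed
  have Bp: "p$2 = 0 \<and> poly ([:s$2, 0, 1:]) (p$1) = 0" if "p \<in> B" for p
  proof -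
    from that have y: "p$1 \<noteq> 0" and e1: "s$1 = - 2 * p$1 * p$2" and e2: "s$2 = - ((p$1)^2) + 5 * (p$2)^4 - 4 * c1 * (p$2)^3 - 3 * c2 * (p$2)^2 - 2 * c3 * p$2"
      unfolding B_def mem by auto
    have "p$1 * p$2 = 0" using e1 z by (simp add: algebra_simps)
    then have x: "p$2 = 0" using y by simp
    show ?thesis using e1 e2 x z by (simp add: algebra_simps power2_eq_square power3_eq_cube power4_eq_xxxx)
  qed
  have cA: "card A \<le> 4"
  proof -
    have "card A \<le> degree ([:-(s$2), -2 * c3, -3 * c2, -4 * c1, 5:])"
    proof (rule card_le_roots[where \<pi>="\<lambda>p. p$2"])
      show "inj_on (\<lambda>p. p$2) A"
      proof (rule inj_onI)
        fix p q assume "p \<in> A" "q \<in> A" "p$2 = q$2"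
        then show "p = q" using Ap[of p] Ap[of q] by (auto simp: vec2_ext)
      qed
    qed (use Ap in auto)
    then show ?thesis by simp
  qed
  have cB: "card B \<le> 2"
  proof -
    have "card B \<le> degree ([:s$2, 0, 1:])"
    proof (rule card_le_roots[where \<pi>="\<lambda>p. p$1"])
      show "inj_on (\<lambda>p. p$1) B"
      proof (rule inj_onI)
        fix p q assume "p \<in> B" "q \<in> B" "p$1 = q$1"
        then show "p = q" using Bp[of p] Bp[of q] by (auto simp: vec2_ext)
      qed
    qed (use Bp in auto)
    then show ?thesis by simp
  qed
  have cards: "card A = 4 \<and> card B = 2"
    using split2[OF fin _ cA[unfolded A_def] cB[unfolded B_def]] card unfolding A_def B_def by simp
  obtain b where b: "b \<in> B" using cards by fastforce
  have Xsq: "(b$1)^2 = - (s$2)" using Bp[OF b] by (simp add: algebra_simps power2_eq_square)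
  have pos: "- (s$2) \<noteq> 0"
  proof -
    have "b$1 \<noteq> 0" using b B_def Bp[OF b] by auto
    then have "(b$1)^2 \<noteq> 0" by simp
    then show ?thesis unfolding Xsq .
  qed
  have sA: "(\<Sum>p\<in>A. 1 / J p) = 1 / ((2) * poly ([:-(s$2), -2 * c3, -3 * c2, -4 * c1, 5:]) (0))"
  proof (rule pf_sum[where \<pi>="\<lambda>p. p$2"])
    show "card A = degree ([:-(s$2), -2 * c3, -3 * c2, -4 * c1, 5:])" using cards by simp
    show "inj_on (\<lambda>p. p$2) A"
    proof (rule inj_onI)
      fix p q assume "p \<in> A" "q \<in> A" "p$2 = q$2"
      then show "p = q" using Ap[of p] Ap[of q] by (auto simp: vec2_ext)
    qed
    show "\<forall>p\<in>A. poly ([:-(s$2), -2 * c3, -3 * c2, -4 * c1, 5:]) (p$2) = 0" using Ap by blast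
    show "poly ([:-(s$2), -2 * c3, -3 * c2, -4 * c1, 5:]) (0) \<noteq> 0" using pos by (simp add: algebra_simps power2_eq_square power3_eq_cube power4_eq_xxxx)
    show "\<forall>p\<in>A. J p = (2) * (0 - p$2) * poly (pderiv ([:-(s$2), -2 * c3, -3 * c2, -4 * c1, 5:])) (p$2)"
    proof
      fix p assume "p \<in> A"
      then have x: "p$1 = 0" using Ap by blast
      show "J p = (2) * (0 - p$2) * poly (pderiv ([:-(s$2), -2 * c3, -3 * c2, -4 * c1, 5:])) (p$2)"
        unfolding J_def x by (simp add: pderiv_pCons algebra_simps power2_eq_square power3_eq_cube)
    qed
  qed simp_all
  have sB: "(\<Sum>p\<in>B. 1 / J p) = 2 * (1 / (4 * (s$2)))"
  proof -
    have "\<forall>p\<in>B. J p = 4 * (s$2)"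
    proof
      fix p assume "p \<in> B"
      then have x: "p$2 = 0" and y: "(p$1)^2 = - (s$2)"
        using Bp[OF \<open>p \<in> B\<close>] by (simp_all add: algebra_simps power2_eq_square)
      show "J p = 4 * (s$2)" unfolding J_def x using y by (simp add: algebra_simps power2_eq_square; linarith?)
    qed
    then have "(\<Sum>p\<in>B. 1 / J p) = (\<Sum>p\<in>B. 1 / (4 * (s$2)))" by simp
    then show ?thesis using cards by simp
  qed
  have "(\<Sum>p\<in>?S. 1 / J p) = (\<Sum>p\<in>A. 1 / J p) + (\<Sum>p\<in>B. 1 / J p)"
    unfolding A_def B_def by (rule sum_split2[OF fin])
  also have "\<dots> = 0" unfolding sA sB using pos
    by (simp add: field_simps power2_eq_square power3_eq_cube)
  finally show "(\<Sum>p\<in>?S. 1 / ((-2*p$2) * (20*(p$2)^3 - 12*c1*(p$2)^2 - 6*c2*p$2 - 2*c3) - (-2*p$1) * (-2*p$1))) = 0"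
    unfolding J_def .
qed

lemma case_HyperbolicUmbilic20:
  assumes card: "card {p. lens_map HyperbolicUmbilic2 (c1,c2,c3) p = s} = 6" and z: "s$1 = 0"
  shows "(\<Sum>p\<in>{p. lens_map HyperbolicUmbilic2 (c1,c2,c3) p = s}. magnification HyperbolicUmbilic2 (c1,c2,c3) p) = 0"
  unfolding magnification_def jac_HyperbolicUmbilic2
proof -
  let ?S = "{p. lens_map HyperbolicUmbilic2 (c1,c2,c3) p = s}"
  define J where "J p = (-2*p$2) * (-20*(p$2)^3 - 12*c1*(p$2)^2 - 6*c2*p$2 - 2*c3) - (-2*p$1) * (-2*p$1)" for p :: "real^2"
  have fin: "finite ?S" using card by (metis card.infinite zero_neq_numeral)
  have mem: "p \<in> ?S \<longleftrightarrow> s$1 = - 2 * p$1 * p$2 \<and> s$2 = - ((p$1)^2) - 5 * (p$2)^4 - 4 * c1 * (p$2)^3 - 3 * c2 * (p$2)^2 - 2 * c3 * p$2" for p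
    unfolding memS by simp
  define A where "A = {p\<in>?S. p$1 = 0}"
  define B where "B = {p\<in>?S. \<not> p$1 = 0}"
  have Ap: "p$1 = 0 \<and> poly ([:-(s$2), -2 * c3, -3 * c2, -4 * c1, - 5:]) (p$2) = 0" if "p \<in> A" for p
  proof -
    from that have x: "p$1 = 0" and e1: "s$1 = - 2 * p$1 * p$2" and e2: "s$2 = - ((p$1)^2) - 5 * (p$2)^4 - 4 * c1 * (p$2)^3 - 3 * c2 * (p$2)^2 - 2 * c3 * p$2"
      unfolding A_def mem by auto
    show ?thesis using e1 e2 x z by (simp add: algebra_simps power2_eq_square power3_eq_cube power4_eq_xxxx)
  qed
  have Bp: "p$2 = 0 \<and> poly ([:s$2, 0, 1:]) (p$1) = 0" if "p \<in> B" for p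
  proof -
    from that have y: "p$1 \<noteq> 0" and e1: "s$1 = - 2 * p$1 * p$2" and e2: "s$2 = - ((p$1)^2) - 5 * (p$2)^4 - 4 * c1 * (p$2)^3 - 3 * c2 * (p$2)^2 - 2 * c3 * p$2"
      unfolding B_def mem by auto
    have "p$1 * p$2 = 0" using e1 z by (simp add: algebra_simps)
    then have x: "p$2 = 0" using y by simp
    show ?thesis using e1 e2 x z by (simp add: algebra_simps power2_eq_square power3_eq_cube power4_eq_xxxx)
  qed
  have cA: "card A \<le> 4"
  proof -
    have "card A \<le> degree ([:-(s$2), -2 * c3, -3 * c2, -4 * c1, - 5:])"
    proof (rule card_le_roots[where \<pi>="\<lambda>p. p$2"])
      show "inj_on (\<lambda>p. p$2) A"
      proof (rule inj_onI)
        fix p q assume "p \<in> A" "q \<in> A" "p$2 = q$2"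
        then show "p = q" using Ap[of p] Ap[of q] by (auto simp: vec2_ext)
      qed
    qed (use Ap in auto)
    then show ?thesis by simp
  qed
  have cB: "card B \<le> 2"
  proof -
    have "card B \<le> degree ([:s$2, 0, 1:])"
    proof (rule card_le_roots[where \<pi>="\<lambda>p. p$1"])
      show "inj_on (\<lambda>p. p$1) B"
      proof (rule inj_onI)
        fix p q assume "p \<in> B" "q \<in> B" "p$1 = q$1"
        then show "p = q" using Bp[of p] Bp[of q] by (auto simp: vec2_ext)
      qed
    qed (use Bp in auto)
    then show ?thesis by simp
  qed
  have cards: "card A = 4 \<and> card B = 2"
    using split2[OF fin _ cA[unfolded A_def] cB[unfolded B_def]] card unfolding A_def B_def by simp
  obtain b where b: "b \<in> B" using cards by fastforce
  have Xsq: "(b$1)^2 = - (s$2)" using Bp[OF b] by (simp add: algebra_simps power2_eq_square)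
  have pos: "- (s$2) \<noteq> 0"
  proof -
    have "b$1 \<noteq> 0" using b B_def Bp[OF b] by auto
    then have "(b$1)^2 \<noteq> 0" by simp
    then show ?thesis unfolding Xsq .
  qed
  have sA: "(\<Sum>p\<in>A. 1 / J p) = 1 / ((2) * poly ([:-(s$2), -2 * c3, -3 * c2, -4 * c1, - 5:]) (0))"
  proof (rule pf_sum[where \<pi>="\<lambda>p. p$2"])
    show "card A = degree ([:-(s$2), -2 * c3, -3 * c2, -4 * c1, - 5:])" using cards by simp
    show "inj_on (\<lambda>p. p$2) A"
    proof (rule inj_onI)
      fix p q assume "p \<in> A" "q \<in> A" "p$2 = q$2"
      then show "p = q" using Ap[of p] Ap[of q] by (auto simp: vec2_ext)
    qed
    show "\<forall>p\<in>A. poly ([:-(s$2), -2 * c3, -3 * c2, -4 * c1, - 5:]) (p$2) = 0" using Ap by blast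
    show "poly ([:-(s$2), -2 * c3, -3 * c2, -4 * c1, - 5:]) (0) \<noteq> 0" using pos by (simp add: algebra_simps power2_eq_square power3_eq_cube power4_eq_xxxx)
    show "\<forall>p\<in>A. J p = (2) * (0 - p$2) * poly (pderiv ([:-(s$2), -2 * c3, -3 * c2, -4 * c1, - 5:])) (p$2)"
    proof
      fix p assume "p \<in> A"
      then have x: "p$1 = 0" using Ap by blast
      show "J p = (2) * (0 - p$2) * poly (pderiv ([:-(s$2), -2 * c3, -3 * c2, -4 * c1, - 5:])) (p$2)"
        unfolding J_def x by (simp add: pderiv_pCons algebra_simps power2_eq_square power3_eq_cube)
    qed
  qed simp_all
  have sB: "(\<Sum>p\<in>B. 1 / J p) = 2 * (1 / (4 * (s$2)))"
  proof -
    have "\<forall>p\<in>B. J p = 4 * (s$2)"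
    proof
      fix p assume "p \<in> B"
      then have x: "p$2 = 0" and y: "(p$1)^2 = - (s$2)"
        using Bp[OF \<open>p \<in> B\<close>] by (simp_all add: algebra_simps power2_eq_square)
      show "J p = 4 * (s$2)" unfolding J_def x using y by (simp add: algebra_simps power2_eq_square; linarith?)
    qed
    then have "(\<Sum>p\<in>B. 1 / J p) = (\<Sum>p\<in>B. 1 / (4 * (s$2)))" by simp
    then show ?thesis using cards by simp
  qed
  have "(\<Sum>p\<in>?S. 1 / J p) = (\<Sum>p\<in>A. 1 / J p) + (\<Sum>p\<in>B. 1 / J p)"
    unfolding A_def B_def by (rule sum_split2[OF fin])
  also have "\<dots> = 0" unfolding sA sB using pos
    by (simp add: field_simps power2_eq_square power3_eq_cube)
  finally show "(\<Sum>p\<in>?S. 1 / ((-2*p$2) * (-20*(p$2)^3 - 12*c1*(p$2)^2 - 6*c2*p$2 - 2*c3) - (-2*p$1) * (-2*p$1))) = 0"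
    unfolding J_def .
qed

lemma inv_neg: "a = - b \<Longrightarrow> 1 / a = - (1 / (b::real))" by simp

lemma case_hyperbolic_c0:
  assumes "c1 = 0"
  shows "(\<Sum>p\<in>{p. lens_map HyperbolicUmbilic (c1,c2,c3) p = s}. magnification HyperbolicUmbilic (c1,c2,c3) p) = 0"
  unfolding magnification_def jac_HyperbolicUmbilic
proof (rule sum_odd_inv[where \<sigma>="\<lambda>p. vec2 (- p$1) (p$2)"])
  show "\<forall>p\<in>{p. lens_map HyperbolicUmbilic (c1,c2,c3) p = s}. vec2 (- p$1) (p$2) \<in> {p. lens_map HyperbolicUmbilic (c1,c2,c3) p = s}"
    using assms by (auto simp: memS)
qed (use assms in \<open>auto simp: vec2_ext\<close>)

lemma case_symbolic_c0:
  assumes "c1 = 0" "c2 = 0"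
  shows "(\<Sum>p\<in>{p. lens_map SymbolicUmbilic (c1,c2,c3) p = s}. magnification SymbolicUmbilic (c1,c2,c3) p) = 0"
  unfolding magnification_def jac_SymbolicUmbilic
proof (rule sum_odd_inv[where \<sigma>="\<lambda>p. vec2 (- p$1) (p$2)"])
  show "\<forall>p\<in>{p. lens_map SymbolicUmbilic (c1,c2,c3) p = s}. vec2 (- p$1) (p$2) \<in> {p. lens_map SymbolicUmbilic (c1,c2,c3) p = s}"
    using assms by (auto simp: memS)
  show "\<forall>p\<in>{p. lens_map SymbolicUmbilic (c1,c2,c3) p = s}.
     1 / ((-6* vec2 (- p$1) (p$2)$1) * (-12*(vec2 (- p$1) (p$2)$2)^2 - 2*c1* vec2 (- p$1) (p$2)$1 - 2*c3) - (-2*c1* vec2 (- p$1) (p$2)$2 - c2) * (-2*c1* vec2 (- p$1) (p$2)$2 - c2))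
     = - (1 / ((-6*p$1) * (-12*(p$2)^2 - 2*c1*p$1 - 2*c3) - (-2*c1*p$2 - c2) * (-2*c1*p$2 - c2)))"
  proof
    fix p :: "real^2"
    have "(-6* vec2 (- p$1) (p$2)$1) * (-12*(vec2 (- p$1) (p$2)$2)^2 - 2*c1* vec2 (- p$1) (p$2)$1 - 2*c3) - (-2*c1* vec2 (- p$1) (p$2)$2 - c2) * (-2*c1* vec2 (- p$1) (p$2)$2 - c2)
      = - ((-6*p$1) * (-12*(p$2)^2 - 2*c1*p$1 - 2*c3) - (-2*c1*p$2 - c2) * (-2*c1*p$2 - c2))"
      using assms by (simp add: algebra_simps)
    then show "1 / ((-6* vec2 (- p$1) (p$2)$1) * (-12*(vec2 (- p$1) (p$2)$2)^2 - 2*c1* vec2 (- p$1) (p$2)$1 - 2*c3) - (-2*c1* vec2 (- p$1) (p$2)$2 - c2) * (-2*c1* vec2 (- p$1) (p$2)$2 - c2))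
     = - (1 / ((-6*p$1) * (-12*(p$2)^2 - 2*c1*p$1 - 2*c3) - (-2*c1*p$2 - c2) * (-2*c1*p$2 - c2)))"
      by (rule inv_neg)
  qed
qed (auto simp: vec2_ext)

lemma final_sym:
  fixes a c u :: real
  assumes u: "u \<noteq> 0" and d1: "a + c*u \<noteq> 0" and d2: "a - c*u \<noteq> 0"
  shows "1 / ((-2 / c) * (- 3 * (a - c*u) * (a + c*u))) + (1 / (12 * u * (a + c*u)) + 1 / (- 12 * u * (a - c*u))) = 0"
proof -
  define D1 where "D1 = a + c*u"
  define D2 where "D2 = a - c*u"
  have e: "D1 - D2 = 2 * c * u" unfolding D1_def D2_def by simp
  have n1: "D1 \<noteq> 0" and n2: "D2 \<noteq> 0" using d1 d2 D1_def D2_def by auto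
  have "1 / (12 * u * D1) + 1 / (- 12 * u * D2) = (D1 - D2) / (- 12 * u * D1 * D2)"
    using u n1 n2 by (simp add: field_simps)
  also have "\<dots> = - c / (6 * D1 * D2)" unfolding e using u n1 n2 by (simp add: field_simps)
  finally have h: "1 / (12 * u * D1) + 1 / (- 12 * u * D2) = - c / (6 * D1 * D2)" .
  have h2: "1 / ((-2 / c) * (- 3 * D2 * D1)) = c / (6 * D1 * D2)"
    by (cases "c = 0") (simp_all add: field_simps)
  show ?thesis using h h2 unfolding D1_def[symmetric] D2_def[symmetric] by simp
qed

lemma case_symbolic_sp:
  assumes card: "card {p. lens_map SymbolicUmbilic (c1,c2,c3) p = s} = 6"
    and nc: "\<not> caustic SymbolicUmbilic (c1,c2,c3) s" and c1: "c1 \<noteq> 0"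
    and p0: "p0 \<in> {p. lens_map SymbolicUmbilic (c1,c2,c3) p = s}" and y0: "2 * c1 * p0$2 + c2 = 0"
  shows "(\<Sum>p\<in>{p. lens_map SymbolicUmbilic (c1,c2,c3) p = s}. magnification SymbolicUmbilic (c1,c2,c3) p) = 0"
  unfolding magnification_def jac_SymbolicUmbilic
proof -
  let ?S = "{p. lens_map SymbolicUmbilic (c1,c2,c3) p = s}"
  define J where "J p = (-6*p$1) * (-12*(p$2)^2 - 2*c1*p$1 - 2*c3) - (-2*c1*p$2 - c2) * (-2*c1*p$2 - c2)" for p :: "real^2"
  define y0 where "y0 = p0$2"
  have c2: "c2 = -2 * c1 * y0" using y0 unfolding y0_def by simp
  have fin: "finite ?S" using card by (metis card.infinite zero_neq_numeral)
  have mem: "p \<in> ?S \<longleftrightarrow> s$1 = - 3 * (p$1)^2 - c1 * (p$2)^2 - c2 * p$2 \<and> s$2 = - 4 * (p$2)^3 - 2 * c1 * p$1 * p$2 - c2 * p$1 - 2 * c3 * p$2" for p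
    unfolding memS by simp
  have s2: "s$2 = - 4 * y0^3 - 2 * c3 * y0"
  proof -
    have "s$2 = - 4 * (p0$2)^3 - 2 * c1 * p0$1 * p0$2 - c2 * p0$1 - 2 * c3 * p0$2" using p0 mem by blast
    then show ?thesis unfolding c2 y0_def by (simp add: algebra_simps)
  qed
  have Jnz: "J p \<noteq> 0" if "p \<in> ?S" for p
    using nc that unfolding caustic_def jac_SymbolicUmbilic J_def by auto
  define Q2 where "Q2 = [:(- (c1^2 * (s$1)) - 12 * c3 * y0^2 - 3 * c3^2 - 12 * y0^4), (2 * c1^3 * y0 - 12 * c3 * y0 - 24 * y0^3), (- (c1^3) - 12 * c3 - 36 * y0^2), (- 24 * y0), (- 12):]"
  define w where "w y = 2 * (y^2 + y * y0 + y0^2) + c3" for y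
  have Q2ev: "poly Q2 y = -3 * (w y)^2 - c1^2 * (c1 * y^2 - 2 * c1 * y0 * y + s$1)" for y
    unfolding Q2_def w_def by simp algebra
  define A where "A = {p\<in>?S. p$2 \<noteq> y0}"
  define B where "B = {p\<in>?S. \<not> p$2 \<noteq> y0}"
  have Ap: "c1 * p$1 + w (p$2) = 0 \<and> poly Q2 (p$2) = 0" if "p \<in> A" for p
  proof -
    from that have y: "p$2 \<noteq> y0" and e1: "s$1 = - 3 * (p$1)^2 - c1 * (p$2)^2 - c2 * p$2"
      and e2: "s$2 = - 4 * (p$2)^3 - 2 * c1 * p$1 * p$2 - c2 * p$1 - 2 * c3 * p$2"
      unfolding A_def mem by auto
    have "(p$2 - y0) * (c1 * p$1 + w (p$2)) = 0"
      using e2 s2 c2 unfolding w_def by algebra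
    then have x: "c1 * p$1 + w (p$2) = 0" using y by simp
    have "poly Q2 (p$2) = 3 * (c1 * p$1 - w (p$2)) * (c1 * p$1 + w (p$2))"
      unfolding Q2ev e1 c2 by algebra
    then show ?thesis using x by simp
  qed
  have Bp: "p$2 = y0 \<and> poly [:s$1 - c1 * y0^2, 0, 3:] (p$1) = 0" if "p \<in> B" for p
  proof -
    from that have y: "p$2 = y0" and e1: "s$1 = - 3 * (p$1)^2 - c1 * (p$2)^2 - c2 * p$2"
      unfolding B_def mem by auto
    show ?thesis using e1 y c2 by (simp add: algebra_simps power2_eq_square)
  qed
  have injA: "inj_on (\<lambda>p. p$2) A"
  proof (rule inj_onI)
    fix p q assume "p \<in> A" "q \<in> A" "p$2 = q$2"
    then have a: "c1 * p$1 + w (p$2) = 0" and b: "c1 * q$1 + w (p$2) = 0" using Ap[of p] Ap[of q] by auto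
    then have "c1 * p$1 = c1 * q$1" by linarith
    then show "p = q" using c1 \<open>p$2 = q$2\<close> by (simp add: vec2_ext)
  qed
  have dQ2: "degree Q2 = 4" unfolding Q2_def by simp
  have cA: "card A \<le> 4"
  proof -
    have "card A \<le> degree Q2"
      by (rule card_le_roots[where \<pi>="\<lambda>p. p$2"]) (use injA Ap dQ2 in auto)
    then show ?thesis using dQ2 by simp
  qed
  have cB: "card B \<le> 2"
  proof -
    have "card B \<le> degree [:s$1 - c1 * y0^2, 0, 3:]"
    proof (rule card_le_roots[where \<pi>="\<lambda>p. p$1"])
      show "inj_on (\<lambda>p. p$1) B"
      proof (rule inj_onI)
        fix p q assume "p \<in> B" "q \<in> B" "p$1 = q$1"
        then show "p = q" using Bp[of p] Bp[of q] by (auto simp: vec2_ext)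
      qed
    qed (use Bp in auto)
    then show ?thesis by simp
  qed
  have cards: "card A = 4 \<and> card B = 2"
    using split2[OF fin _ cA[unfolded A_def] cB[unfolded B_def]] card unfolding A_def B_def by simp
  then obtain p q where Bpq: "B = {p, q}" and pq: "p \<noteq> q" by (meson card_2_iff)
  have pB: "p \<in> B" and qB: "q \<in> B" using Bpq by auto
  have py: "p$2 = y0" and qy: "q$2 = y0" using Bp pB qB by auto
  have px: "3 * (p$1)^2 = c1 * y0^2 - s$1" and qx: "3 * (q$1)^2 = c1 * y0^2 - s$1"
    using Bp[OF pB] Bp[OF qB] by (simp_all add: algebra_simps power2_eq_square)
  define u where "u = p$1"
  define \<alpha> where "\<alpha> = 6 * y0^2 + c3"
  have qu: "q$1 = - u"
  proof -
    have "(p$1 - q$1) * (p$1 + q$1) = 0" using px qx by (simp add: algebra_simps power2_eq_square)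
    moreover have "p$1 \<noteq> q$1" using pq py qy by (auto simp: vec2_ext)
    ultimately have "p$1 + q$1 = 0" by simp
    then show ?thesis unfolding u_def by linarith
  qed
  have Jp: "J p = 12 * u * (\<alpha> + c1 * u)" unfolding J_def u_def \<alpha>_def py c2 by (simp add: algebra_simps power2_eq_square)
  have Jq: "J q = - 12 * u * (\<alpha> - c1 * u)" unfolding J_def \<alpha>_def qy qu c2 by (simp add: algebra_simps power2_eq_square)
  have nz1: "u \<noteq> 0" "\<alpha> + c1 * u \<noteq> 0" using Jnz[of p] pB B_def Jp by auto
  have nz2: "\<alpha> - c1 * u \<noteq> 0" using Jnz[of q] qB B_def Jq by auto
  have Q2y0: "poly Q2 y0 = - 3 * (\<alpha> - c1 * u) * (\<alpha> + c1 * u)"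
  proof -
    have s1u: "s$1 = c1 * y0^2 - 3 * u^2" using px unfolding u_def by simp
    show ?thesis unfolding Q2ev s1u w_def \<alpha>_def by algebra
  qed
  have sA: "(\<Sum>p\<in>A. 1 / J p) = 1 / ((-2 / c1) * poly Q2 y0)"
  proof (rule pf_sum[where \<pi>="\<lambda>p. p$2"])
    show "card A = degree Q2" using cards dQ2 by simp
    show "inj_on (\<lambda>p. p$2) A" by (rule injA)
    show "\<forall>p\<in>A. poly Q2 (p$2) = 0" using Ap by blast
    show "poly Q2 y0 \<noteq> 0" unfolding Q2y0 using nz1 nz2 by simp
    show "-2 / c1 \<noteq> 0" using c1 by simp
    show "\<forall>p\<in>A. J p = (-2 / c1) * (y0 - p$2) * poly (pderiv Q2) (p$2)"
    proof
      fix p assume "p \<in> A"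
      then have x: "c1 * p$1 + w (p$2) = 0" using Ap by blast
      have "c1 * J p = -6*(c1*p$1)*(-12*(p$2)^2 - 2*c3) + 12*(c1*p$1)^2 - 4*c1^3*(p$2 - y0)^2"
        unfolding J_def c2 by algebra
      also have "c1*p$1 = - w (p$2)" using x by simp
      also have "-6*(- w (p$2))*(-12*(p$2)^2 - 2*c3) + 12*(- w (p$2))^2 - 4*c1^3*(p$2 - y0)^2
          = -2 * (y0 - p$2) * poly (pderiv Q2) (p$2)"
        unfolding w_def Q2_def by (simp add: pderiv_pCons) algebra
      finally have "c1 * J p = -2 * (y0 - p$2) * poly (pderiv Q2) (p$2)" .
      then show "J p = (-2 / c1) * (y0 - p$2) * poly (pderiv Q2) (p$2)"
        using c1 by (simp add: field_simps)
    qed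
  qed (use dQ2 in simp)
  have sB: "(\<Sum>p\<in>B. 1 / J p) = 1 / J p + 1 / J q" unfolding Bpq using pq by simp
  have "(\<Sum>p\<in>?S. 1 / J p) = (\<Sum>p\<in>A. 1 / J p) + (\<Sum>p\<in>B. 1 / J p)"
    unfolding A_def B_def by (rule sum_split2[OF fin])
  also have "\<dots> = 0" unfolding sA sB Q2y0 Jp Jq by (rule final_sym[OF nz1(1) nz1(2) nz2])
  finally show "(\<Sum>p\<in>?S. 1 / ((-6*p$1) * (-12*(p$2)^2 - 2*c1*p$1 - 2*c3) - (-2*c1*p$2 - c2) * (-2*c1*p$2 - c2))) = 0"
    unfolding J_def .
qed

theorem theorem1:
  fixes k :: catastrophe and c :: "real \<times> real \<times> real" and s :: "real^2"
  assumes "\<not> caustic k c s"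
    and "card {p. lens_map k c p = s} = max_images k"
  shows "(\<Sum>p\<in>{p. lens_map k c p = s}. magnification k c p) = 0"
proof -
  obtain c1 c2 c3 where c: "c = (c1, c2, c3)" by (cases c) auto
  have nc: "\<not> caustic k (c1,c2,c3) s" and card: "card {p. lens_map k (c1,c2,c3) p = s} = max_images k"
    using assms c by auto
  have main: "(\<Sum>p\<in>{p. lens_map k (c1,c2,c3) p = s}. magnification k (c1,c2,c3) p) = 0"
  proof (cases k)
    case Fold
    have cK: "card {p. lens_map Fold (c1,c2,c3) p = s} = 2" using card unfolding Fold by (simp only: max_images.simps)
    show ?thesis unfolding Fold by (rule case_fold[OF cK])
  next
    case Cusp
    have cK: "card {p. lens_map Cusp (c1,c2,c3) p = s} = 3" using card unfolding Cusp by (simp only: max_images.simps)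
    show ?thesis unfolding Cusp by (rule case_cusp[OF cK])
  next
    case Swallowtail
    have cK: "card {p. lens_map Swallowtail (c1,c2,c3) p = s} = 4" using card unfolding Swallowtail by (simp only: max_images.simps)
    show ?thesis unfolding Swallowtail by (rule case_swallowtail[OF cK])
  next
    case EllipticUmbilic
    have cK: "card {p. lens_map EllipticUmbilic (c1,c2,c3) p = s} = 4" using card unfolding EllipticUmbilic by (simp only: max_images.simps)
    show ?thesis
    proof (cases "s$2 = 0")
      case True then show ?thesis unfolding EllipticUmbilic by (rule case_elliptic0[OF cK])
    next
      case False then show ?thesis unfolding EllipticUmbilic by (rule case_elliptic[OF cK])
    qed
  next
    case HyperbolicUmbilic
    have cK: "card {p. lens_map HyperbolicUmbilic (c1,c2,c3) p = s} = 4" using card unfolding HyperbolicUmbilic by (simp only: max_images.simps)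
    show ?thesis
    proof (cases "c1 = 0")
      case True then show ?thesis unfolding HyperbolicUmbilic by (rule case_hyperbolic_c0)
    next
      case False then show ?thesis unfolding HyperbolicUmbilic by (rule case_hyperbolic[OF cK])
    qed
  next
    case Butterfly
    have cK: "card {p. lens_map Butterfly (c1,c2,c3) p = s} = 5" using card unfolding Butterfly by (simp only: max_images.simps)
    show ?thesis unfolding Butterfly by (rule case_butterfly[OF cK])
  next
    case ParabolicUmbilic
    have cK: "card {p. lens_map ParabolicUmbilic (c1,c2,c3) p = s} = 5" using card unfolding ParabolicUmbilic by (simp only: max_images.simps)
    show ?thesis
    proof (cases "s$1 = 0")
      case True then show ?thesis unfolding ParabolicUmbilic by (rule case_parabolic0[OF cK])
    next
      case False then show ?thesis unfolding ParabolicUmbilic by (rule case_parabolic[OF cK])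
    qed
  next
    case Wigwam
    have cK: "card {p. lens_map Wigwam (c1,c2,c3) p = s} = 6" using card unfolding Wigwam by (simp only: max_images.simps)
    show ?thesis unfolding Wigwam by (rule case_wigwam[OF cK])
  next
    case SymbolicUmbilic
    have card6: "card {p. lens_map SymbolicUmbilic (c1,c2,c3) p = s} = 6" using card unfolding SymbolicUmbilic by (simp only: max_images.simps)
    have nc': "\<not> caustic SymbolicUmbilic (c1,c2,c3) s" using nc unfolding SymbolicUmbilic .
    show ?thesis
    proof (cases "c1 = 0 \<and> c2 = 0")
      case True then show ?thesis unfolding SymbolicUmbilic by (intro case_symbolic_c0) auto
    next
      case False
      show ?thesis
      proof (cases "\<exists>p0\<in>{p. lens_map SymbolicUmbilic (c1,c2,c3) p = s}. 2 * c1 * p0$2 + c2 = 0")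
        case True
        then obtain p0 where p0: "p0 \<in> {p. lens_map SymbolicUmbilic (c1,c2,c3) p = s}" and y0: "2 * c1 * p0$2 + c2 = 0" by blast
        have c1: "c1 \<noteq> 0" using False y0 by auto
        show ?thesis unfolding SymbolicUmbilic by (rule case_symbolic_sp[OF card6 nc' c1 p0 y0])
      next
        case False
        then have nz: "\<forall>p\<in>{p. lens_map SymbolicUmbilic (c1,c2,c3) p = s}. 2 * c1 * p$2 + c2 \<noteq> 0" by blast
        show ?thesis unfolding SymbolicUmbilic by (rule case_symbolic[OF card6 nz])
      qed
    qed
  next
    case EllipticUmbilic2
    have cK: "card {p. lens_map EllipticUmbilic2 (c1,c2,c3) p = s} = 6" using card unfolding EllipticUmbilic2 by (simp only: max_images.simps)
    show ?thesis
    proof (cases "s$1 = 0")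
      case True then show ?thesis unfolding EllipticUmbilic2 by (rule case_EllipticUmbilic20[OF cK])
    next
      case False then show ?thesis unfolding EllipticUmbilic2 by (rule case_eu2[OF cK])
    qed
  next
    case HyperbolicUmbilic2
    have cK: "card {p. lens_map HyperbolicUmbilic2 (c1,c2,c3) p = s} = 6" using card unfolding HyperbolicUmbilic2 by (simp only: max_images.simps)
    show ?thesis
    proof (cases "s$1 = 0")
      case True then show ?thesis unfolding HyperbolicUmbilic2 by (rule case_HyperbolicUmbilic20[OF cK])
    next
      case False then show ?thesis unfolding HyperbolicUmbilic2 by (rule case_hu2[OF cK])
    qed
  qed
  then show ?thesis using c by simp
qed

end
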